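(* For every locale $X$, the category $FrmSh(X)$ of frame sheaves on $X$ and frame morphisms is equivalent to the coslice category $\mathcal{O}(X)/Frm$ of frames under $\mathcal{O}(X)$. The equivalence is given by the functor $\Phi:\mathcal{O}(X)/Frm\to FrmSh(X)$ sending a frame homomorphism $f:\mathcal{O}(X)\to L$ to the sheaf $\Phi(f)(u)=\{x\in L\mid x\le f(u)\}$ with restriction maps $x\mapsto x\wedge f(v)$ ($v\le u$), and a morphism $h:L\to M$ with $hf=g$ to its restrictions $\Phi(f)(u)\to\Phi(g)(u)$; a quasi-inverse is $\Psi:FrmSh(X)\to\mathcal{O}(X)/Frm$, $\Psi(F)=F(1_X)$ with the frame homomorphism $u\mapsto l_{u,1_X}(\top_{F(u)})$, and $\Psi(\alpha)=\alpha_{1_X}$.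
   Context: Let $X$ be a locale with frame of opens $\mathcal{O}(X)$ and top $1_X$. A posheaf on $X$ is a sheaf of sets $F$ with (POS1) each $F(u)$ a poset; (POS2) restriction maps $F(u)\to F(v)$, $x\mapsto x|_v$ ($v\le u$), order-preserving; (POS3) if $u=\bigvee_i u_i$ and $s,t\in F(u)$ satisfy $s|_{u_i}\le t|_{u_i}$ for all $i$, then $s\le t$. A frame sheaf is a posheaf $F$ such that each $F(u)$ is a frame, each restriction map $F(u)\to F(v)$ ($v\le u$) is surjective and has a left adjoint $l_{v,u}:F(v)\to F(u)$ and a right adjoint, and $x\wedge l_{v,u}(y)=l_{v,u}(x|_v\wedge y)$ for $x\in F(u)$, $y\in F(v)$. A frame morphism $\alpha:F\to G$ of frame sheaves is a morphism of sheaves such that each $\alpha_u$ is a frame homomorphism and $\alpha_u\circ l^F_{v,u}=l^G_{v,u}\circ\alpha_v$ for all $v\le u$. $\top_{F(u)}$ is the top element of $F(u)$. Objects of $\mathcal{O}(X)/Frm$ are frame homomorphisms $f:\mathcal{O}(X)\to L$; morphisms $f\to g$ (with $g:\mathcal{O}(X)\to M$) are frame homomorphisms $h:L\to M$ with $hf=g$. *)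

theory Defs
  imports Main
begin

definition poset_on :: "'a set \<Rightarrow> ('a \<Rightarrow> 'a \<Rightarrow> bool) \<Rightarrow> bool" where
  "poset_on A le \<longleftrightarrow>
     (\<forall>x\<in>A. le x x) \<and>
     (\<forall>x\<in>A. \<forall>y\<in>A. le x y \<and> le y x \<longrightarrow> x = y) \<and>
     (\<forall>x\<in>A. \<forall>y\<in>A. \<forall>z\<in>A. le x y \<and> le y z \<longrightarrow> le x z)"

definition is_lub :: "'a set \<Rightarrow> ('a \<Rightarrow> 'a \<Rightarrow> bool) \<Rightarrow> 'a set \<Rightarrow> 'a \<Rightarrow> bool" where
  "is_lub A le S x \<longleftrightarrow> x \<in> A \<and> (\<forall>s\<in>S. le s x) \<and> (\<forall>y\<in>A. (\<forall>s\<in>S. le s y) \<longrightarrow> le x y)"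

definition is_glb :: "'a set \<Rightarrow> ('a \<Rightarrow> 'a \<Rightarrow> bool) \<Rightarrow> 'a set \<Rightarrow> 'a \<Rightarrow> bool" where
  "is_glb A le S x \<longleftrightarrow> x \<in> A \<and> (\<forall>s\<in>S. le x s) \<and> (\<forall>y\<in>A. (\<forall>s\<in>S. le y s) \<longrightarrow> le y x)"

definition lub :: "'a set \<Rightarrow> ('a \<Rightarrow> 'a \<Rightarrow> bool) \<Rightarrow> 'a set \<Rightarrow> 'a" where
  "lub A le S = (THE x. is_lub A le S x)"

definition glb :: "'a set \<Rightarrow> ('a \<Rightarrow> 'a \<Rightarrow> bool) \<Rightarrow> 'a set \<Rightarrow> 'a" where
  "glb A le S = (THE x. is_glb A le S x)"

definition meet :: "'a set \<Rightarrow> ('a \<Rightarrow> 'a \<Rightarrow> bool) \<Rightarrow> 'a \<Rightarrow> 'a \<Rightarrow> 'a" where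
  "meet A le x y = glb A le {x, y}"

definition top_of :: "'a set \<Rightarrow> ('a \<Rightarrow> 'a \<Rightarrow> bool) \<Rightarrow> 'a" where
  "top_of A le = lub A le A"

definition complete_lattice_on :: "'a set \<Rightarrow> ('a \<Rightarrow> 'a \<Rightarrow> bool) \<Rightarrow> bool" where
  "complete_lattice_on A le \<longleftrightarrow> poset_on A le \<and> (\<forall>S\<subseteq>A. \<exists>x. is_lub A le S x)"

definition frame_on :: "'a set \<Rightarrow> ('a \<Rightarrow> 'a \<Rightarrow> bool) \<Rightarrow> bool" where
  "frame_on A le \<longleftrightarrow> complete_lattice_on A le \<and>
     (\<forall>x\<in>A. \<forall>S\<subseteq>A. meet A le x (lub A le S) = lub A le ((\<lambda>s. meet A le x s) ` S))"

definition frame_hom ::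
  "'a set \<Rightarrow> ('a \<Rightarrow> 'a \<Rightarrow> bool) \<Rightarrow> 'b set \<Rightarrow> ('b \<Rightarrow> 'b \<Rightarrow> bool) \<Rightarrow> ('a \<Rightarrow> 'b) \<Rightarrow> bool" where
  "frame_hom A leA B leB f \<longleftrightarrow>
     (\<forall>x\<in>A. f x \<in> B) \<and>
     f (top_of A leA) = top_of B leB \<and>
     (\<forall>x\<in>A. \<forall>y\<in>A. f (meet A leA x y) = meet B leB (f x) (f y)) \<and>
     (\<forall>S\<subseteq>A. f (lub A leA S) = lub B leB (f ` S))"

text \<open>A (pre)sheaf is given by sets F u (u in Opn) and restriction maps res u v : F u \<rightarrow> F v
  for v \<le> u, written res u v x = x|_v.\<close>

definition presheaf_on ::
  "'o set \<Rightarrow> ('o \<Rightarrow> 'o \<Rightarrow> bool) \<Rightarrow> ('o \<Rightarrow> 'a set) \<Rightarrow> ('o \<Rightarrow> 'o \<Rightarrow> 'a \<Rightarrow> 'a) \<Rightarrow> bool" where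
  "presheaf_on Opn leO F res \<longleftrightarrow>
     (\<forall>u\<in>Opn. \<forall>v\<in>Opn. leO v u \<longrightarrow> (\<forall>x\<in>F u. res u v x \<in> F v)) \<and>
     (\<forall>u\<in>Opn. \<forall>x\<in>F u. res u u x = x) \<and>
     (\<forall>u\<in>Opn. \<forall>v\<in>Opn. \<forall>w\<in>Opn. leO w v \<and> leO v u \<longrightarrow>
        (\<forall>x\<in>F u. res v w (res u v x) = res u w x))"

definition sheaf_on ::
  "'o set \<Rightarrow> ('o \<Rightarrow> 'o \<Rightarrow> bool) \<Rightarrow> ('o \<Rightarrow> 'a set) \<Rightarrow> ('o \<Rightarrow> 'o \<Rightarrow> 'a \<Rightarrow> 'a) \<Rightarrow> bool" where
  "sheaf_on Opn leO F res \<longleftrightarrow> presheaf_on Opn leO F res \<and>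
     (\<forall>u\<in>Opn. \<forall>U\<subseteq>Opn. lub Opn leO U = u \<longrightarrow>
        (\<forall>s. (\<forall>w\<in>U. s w \<in> F w) \<and>
             (\<forall>w\<in>U. \<forall>w'\<in>U. res w (meet Opn leO w w') (s w) = res w' (meet Opn leO w w') (s w'))
           \<longrightarrow> (\<exists>!x. x \<in> F u \<and> (\<forall>w\<in>U. res u w x = s w))))"

definition posheaf_on ::
  "'o set \<Rightarrow> ('o \<Rightarrow> 'o \<Rightarrow> bool) \<Rightarrow> ('o \<Rightarrow> 'a set) \<Rightarrow> ('o \<Rightarrow> 'a \<Rightarrow> 'a \<Rightarrow> bool)
     \<Rightarrow> ('o \<Rightarrow> 'o \<Rightarrow> 'a \<Rightarrow> 'a) \<Rightarrow> bool" where
  "posheaf_on Opn leO F le res \<longleftrightarrow> sheaf_on Opn leO F res \<and>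
     (\<forall>u\<in>Opn. poset_on (F u) (le u)) \<and>
     (\<forall>u\<in>Opn. \<forall>v\<in>Opn. leO v u \<longrightarrow>
        (\<forall>x\<in>F u. \<forall>y\<in>F u. le u x y \<longrightarrow> le v (res u v x) (res u v y))) \<and>
     (\<forall>u\<in>Opn. \<forall>U\<subseteq>Opn. lub Opn leO U = u \<longrightarrow>
        (\<forall>s\<in>F u. \<forall>t\<in>F u. (\<forall>w\<in>U. le w (res u w s) (res u w t)) \<longrightarrow> le u s t))"

text \<open>The left adjoint l_{v,u} : F v \<rightarrow> F u of restriction F u \<rightarrow> F v (when it exists):
  l(y) is the least x in F u with y \<le> x|_v.\<close>
definition ladj ::
  "('o \<Rightarrow> 'a set) \<Rightarrow> ('o \<Rightarrow> 'a \<Rightarrow> 'a \<Rightarrow> bool) \<Rightarrow> ('o \<Rightarrow> 'o \<Rightarrow> 'a \<Rightarrow> 'a)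
     \<Rightarrow> 'o \<Rightarrow> 'o \<Rightarrow> 'a \<Rightarrow> 'a" where
  "ladj F le res v u y =
     (THE x. x \<in> F u \<and> le v y (res u v x) \<and> (\<forall>z\<in>F u. le v y (res u v z) \<longrightarrow> le u x z))"

definition is_left_adjoint ::
  "('o \<Rightarrow> 'a set) \<Rightarrow> ('o \<Rightarrow> 'a \<Rightarrow> 'a \<Rightarrow> bool) \<Rightarrow> ('o \<Rightarrow> 'o \<Rightarrow> 'a \<Rightarrow> 'a)
     \<Rightarrow> 'o \<Rightarrow> 'o \<Rightarrow> ('a \<Rightarrow> 'a) \<Rightarrow> bool" where
  "is_left_adjoint F le res v u l \<longleftrightarrow>
     (\<forall>y\<in>F v. l y \<in> F u) \<and>
     (\<forall>y\<in>F v. \<forall>x\<in>F u. le u (l y) x \<longleftrightarrow> le v y (res u v x))"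

definition is_right_adjoint ::
  "('o \<Rightarrow> 'a set) \<Rightarrow> ('o \<Rightarrow> 'a \<Rightarrow> 'a \<Rightarrow> bool) \<Rightarrow> ('o \<Rightarrow> 'o \<Rightarrow> 'a \<Rightarrow> 'a)
     \<Rightarrow> 'o \<Rightarrow> 'o \<Rightarrow> ('a \<Rightarrow> 'a) \<Rightarrow> bool" where
  "is_right_adjoint F le res v u r \<longleftrightarrow>
     (\<forall>y\<in>F v. r y \<in> F u) \<and>
     (\<forall>x\<in>F u. \<forall>y\<in>F v. le v (res u v x) y \<longleftrightarrow> le u x (r y))"

definition frame_sheaf_on ::
  "'o set \<Rightarrow> ('o \<Rightarrow> 'o \<Rightarrow> bool) \<Rightarrow> ('o \<Rightarrow> 'a set) \<Rightarrow> ('o \<Rightarrow> 'a \<Rightarrow> 'a \<Rightarrow> bool)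
     \<Rightarrow> ('o \<Rightarrow> 'o \<Rightarrow> 'a \<Rightarrow> 'a) \<Rightarrow> bool" where
  "frame_sheaf_on Opn leO F le res \<longleftrightarrow> posheaf_on Opn leO F le res \<and>
     (\<forall>u\<in>Opn. frame_on (F u) (le u)) \<and>
     (\<forall>u\<in>Opn. \<forall>v\<in>Opn. leO v u \<longrightarrow>
        res u v ` F u = F v \<and>
        (\<exists>l. is_left_adjoint F le res v u l) \<and>
        (\<exists>r. is_right_adjoint F le res v u r) \<and>
        (\<forall>x\<in>F u. \<forall>y\<in>F v.
           meet (F u) (le u) x (ladj F le res v u y) =
           ladj F le res v u (meet (F v) (le v) (res u v x) y)))"

definition frame_morphism ::
  "'o set \<Rightarrow> ('o \<Rightarrow> 'o \<Rightarrow> bool)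
     \<Rightarrow> ('o \<Rightarrow> 'a set) \<Rightarrow> ('o \<Rightarrow> 'a \<Rightarrow> 'a \<Rightarrow> bool) \<Rightarrow> ('o \<Rightarrow> 'o \<Rightarrow> 'a \<Rightarrow> 'a)
     \<Rightarrow> ('o \<Rightarrow> 'b set) \<Rightarrow> ('o \<Rightarrow> 'b \<Rightarrow> 'b \<Rightarrow> bool) \<Rightarrow> ('o \<Rightarrow> 'o \<Rightarrow> 'b \<Rightarrow> 'b)
     \<Rightarrow> ('o \<Rightarrow> 'a \<Rightarrow> 'b) \<Rightarrow> bool" where
  "frame_morphism Opn leO F le res G le' res' \<alpha> \<longleftrightarrow>
     (\<forall>u\<in>Opn. \<forall>x\<in>F u. \<alpha> u x \<in> G u) \<and>
     (\<forall>u\<in>Opn. \<forall>v\<in>Opn. leO v u \<longrightarrow> (\<forall>x\<in>F u. res' u v (\<alpha> u x) = \<alpha> v (res u v x))) \<and>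
     (\<forall>u\<in>Opn. frame_hom (F u) (le u) (G u) (le' u) (\<alpha> u)) \<and>
     (\<forall>u\<in>Opn. \<forall>v\<in>Opn. leO v u \<longrightarrow>
        (\<forall>y\<in>F v. \<alpha> u (ladj F le res v u y) = ladj G le' res' v u (\<alpha> v y)))"

definition coslice_obj ::
  "'o set \<Rightarrow> ('o \<Rightarrow> 'o \<Rightarrow> bool) \<Rightarrow> 'a set \<Rightarrow> ('a \<Rightarrow> 'a \<Rightarrow> bool) \<Rightarrow> ('o \<Rightarrow> 'a) \<Rightarrow> bool" where
  "coslice_obj Opn leO L leL f \<longleftrightarrow> frame_on L leL \<and> frame_hom Opn leO L leL f"

definition coslice_mor ::
  "'o set \<Rightarrow> ('o \<Rightarrow> 'o \<Rightarrow> bool)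
     \<Rightarrow> 'a set \<Rightarrow> ('a \<Rightarrow> 'a \<Rightarrow> bool) \<Rightarrow> ('o \<Rightarrow> 'a)
     \<Rightarrow> 'b set \<Rightarrow> ('b \<Rightarrow> 'b \<Rightarrow> bool) \<Rightarrow> ('o \<Rightarrow> 'b) \<Rightarrow> ('a \<Rightarrow> 'b) \<Rightarrow> bool" where
  "coslice_mor Opn leO L leL f M leM g h \<longleftrightarrow>
     frame_hom L leL M leM h \<and> (\<forall>u\<in>Opn. h (f u) = g u)"

definition phi_F :: "'a set \<Rightarrow> ('a \<Rightarrow> 'a \<Rightarrow> bool) \<Rightarrow> ('o \<Rightarrow> 'a) \<Rightarrow> 'o \<Rightarrow> 'a set" where
  "phi_F L leL f u = {x \<in> L. leL x (f u)}"

definition phi_le :: "('a \<Rightarrow> 'a \<Rightarrow> bool) \<Rightarrow> 'o \<Rightarrow> 'a \<Rightarrow> 'a \<Rightarrow> bool" where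
  "phi_le leL u = leL"

definition phi_res :: "'a set \<Rightarrow> ('a \<Rightarrow> 'a \<Rightarrow> bool) \<Rightarrow> ('o \<Rightarrow> 'a) \<Rightarrow> 'o \<Rightarrow> 'o \<Rightarrow> 'a \<Rightarrow> 'a" where
  "phi_res L leL f u v x = meet L leL x (f v)"

definition phi_mor :: "('a \<Rightarrow> 'b) \<Rightarrow> 'o \<Rightarrow> 'a \<Rightarrow> 'b" where
  "phi_mor h u = h"

definition psi_hom ::
  "'o set \<Rightarrow> ('o \<Rightarrow> 'o \<Rightarrow> bool) \<Rightarrow> ('o \<Rightarrow> 'a set) \<Rightarrow> ('o \<Rightarrow> 'a \<Rightarrow> 'a \<Rightarrow> bool)
     \<Rightarrow> ('o \<Rightarrow> 'o \<Rightarrow> 'a \<Rightarrow> 'a) \<Rightarrow> 'o \<Rightarrow> 'a" where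
  "psi_hom Opn leO F le res u = ladj F le res u (top_of Opn leO) (top_of (F u) (le u))"

end

theory Submission
  imports Defs
begin

lemma poset_refl: "poset_on A le \<Longrightarrow> x \<in> A \<Longrightarrow> le x x"
  unfolding poset_on_def by blast
lemma poset_antisym: "poset_on A le \<Longrightarrow> x \<in> A \<Longrightarrow> y \<in> A \<Longrightarrow> le x y \<Longrightarrow> le y x \<Longrightarrow> x = y"
  unfolding poset_on_def by blast
lemma poset_trans: "poset_on A le \<Longrightarrow> x \<in> A \<Longrightarrow> y \<in> A \<Longrightarrow> z \<in> A \<Longrightarrow> le x y \<Longrightarrow> le y z \<Longrightarrow> le x z"
  unfolding poset_on_def by blast

lemma lub_eq: "poset_on A le \<Longrightarrow> is_lub A le S x \<Longrightarrow> lub A le S = x"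
  unfolding lub_def
proof (rule the_equality)
  fix y assume p: "poset_on A le" and x: "is_lub A le S x" and y: "is_lub A le S y"
  show "y = x" using poset_antisym[OF p, of y x] x y unfolding is_lub_def by blast
qed

lemma glb_eq: "poset_on A le \<Longrightarrow> is_glb A le S x \<Longrightarrow> glb A le S = x"
  unfolding glb_def
proof (rule the_equality)
  fix y assume p: "poset_on A le" and x: "is_glb A le S x" and y: "is_glb A le S y"
  show "y = x" using poset_antisym[OF p, of y x] x y unfolding is_glb_def by blast
qed

lemma cl_poset: "complete_lattice_on A le \<Longrightarrow> poset_on A le"
  unfolding complete_lattice_on_def by blast

lemma cl_is_lub: "complete_lattice_on A le \<Longrightarrow> S \<subseteq> A \<Longrightarrow> is_lub A le S (lub A le S)"
proof -
  assume c: "complete_lattice_on A le" and S: "S \<subseteq> A"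
  then obtain x where x: "is_lub A le S x" unfolding complete_lattice_on_def by blast
  with lub_eq[OF cl_poset[OF c] x] show ?thesis by simp
qed

lemma cl_lub_in: "complete_lattice_on A le \<Longrightarrow> S \<subseteq> A \<Longrightarrow> lub A le S \<in> A"
  using cl_is_lub[of A le S] unfolding is_lub_def by blast
lemma cl_lub_upper: "complete_lattice_on A le \<Longrightarrow> S \<subseteq> A \<Longrightarrow> s \<in> S \<Longrightarrow> le s (lub A le S)"
  using cl_is_lub[of A le S] unfolding is_lub_def by blast
lemma cl_lub_least: "complete_lattice_on A le \<Longrightarrow> S \<subseteq> A \<Longrightarrow> y \<in> A \<Longrightarrow> (\<And>s. s \<in> S \<Longrightarrow> le s y) \<Longrightarrow> le (lub A le S) y"
  using cl_is_lub[of A le S] unfolding is_lub_def by blast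

lemma cl_is_glb: "complete_lattice_on A le \<Longrightarrow> S \<subseteq> A \<Longrightarrow> is_glb A le S (glb A le S)"
proof -
  assume c: "complete_lattice_on A le" and S: "S \<subseteq> A"
  let ?B = "{y\<in>A. \<forall>s\<in>S. le y s}"
  have B: "?B \<subseteq> A" by blast
  have l: "lub A le ?B \<in> A" "\<And>b. b \<in> ?B \<Longrightarrow> le b (lub A le ?B)"
     "\<And>y. y \<in> A \<Longrightarrow> (\<forall>s\<in>?B. le s y) \<Longrightarrow> le (lub A le ?B) y"
    using cl_is_lub[OF c B] unfolding is_lub_def by blast+
  have "is_glb A le S (lub A le ?B)"
    unfolding is_glb_def
  proof (intro conjI ballI impI)
    show "lub A le ?B \<in> A" by fact
    fix s assume s: "s \<in> S"
    show "le (lub A le ?B) s" using l(3)[of s] s S by blast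
  next
    fix y assume "y \<in> A" "\<forall>s\<in>S. le y s"
    then show "le y (lub A le ?B)" using l(2) by blast
  qed
  with glb_eq[OF cl_poset[OF c] this] show ?thesis by simp
qed

lemma meet_comm: "meet A le x y = meet A le y x"
  unfolding meet_def by (simp add: insert_commute)

lemma meet_props:
  assumes c: "complete_lattice_on A le" and "x \<in> A" "y \<in> A"
  shows "meet A le x y \<in> A" "le (meet A le x y) x" "le (meet A le x y) y"
    "\<And>z. z \<in> A \<Longrightarrow> le z x \<Longrightarrow> le z y \<Longrightarrow> le z (meet A le x y)"
proof -
  have xy: "{x,y} \<subseteq> A" using assms by blast
  note g = cl_is_glb[OF c xy]
  show "meet A le x y \<in> A" using g unfolding meet_def is_glb_def by blast
  show "le (meet A le x y) x" using g unfolding meet_def is_glb_def by blast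
  show "le (meet A le x y) y" using g unfolding meet_def is_glb_def by blast
  show "\<And>z. z \<in> A \<Longrightarrow> le z x \<Longrightarrow> le z y \<Longrightarrow> le z (meet A le x y)"
    using g unfolding meet_def is_glb_def by blast
qed

lemma meet_eqI:
  assumes "poset_on A le" "z \<in> A" "le z x" "le z y" "\<And>w. w \<in> A \<Longrightarrow> le w x \<Longrightarrow> le w y \<Longrightarrow> le w z"
  shows "meet A le x y = z"
  unfolding meet_def
proof (rule glb_eq[OF assms(1)])
  show "is_glb A le {x, y} z" unfolding is_glb_def using assms(2-5) by blast
qed

lemma top_props:
  assumes c: "complete_lattice_on A le"
  shows "top_of A le \<in> A" "\<And>x. x \<in> A \<Longrightarrow> le x (top_of A le)"
  using cl_is_lub[OF c, of A] unfolding top_of_def is_lub_def by blast+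

lemma top_eqI: "poset_on A le \<Longrightarrow> t \<in> A \<Longrightarrow> (\<And>x. x \<in> A \<Longrightarrow> le x t) \<Longrightarrow> top_of A le = t"
  unfolding top_of_def by (rule lub_eq) (simp_all add: is_lub_def)

lemma lub_eqI: "poset_on A le \<Longrightarrow> t \<in> A \<Longrightarrow> (\<And>s. s \<in> S \<Longrightarrow> le s t) \<Longrightarrow>
   (\<And>y. y \<in> A \<Longrightarrow> (\<And>s. s \<in> S \<Longrightarrow> le s y) \<Longrightarrow> le t y) \<Longrightarrow> lub A le S = t"
  by (rule lub_eq) (simp_all add: is_lub_def)

lemma meet_absorb: assumes c: "complete_lattice_on A le" shows "x \<in> A \<Longrightarrow> y \<in> A \<Longrightarrow> le x y \<Longrightarrow> meet A le x y = x"
  by (rule meet_eqI[OF cl_poset[OF c]]) (simp_all add: poset_refl[OF cl_poset[OF c]])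

lemma meet_le_iff: "complete_lattice_on A le \<Longrightarrow> x \<in> A \<Longrightarrow> y \<in> A \<Longrightarrow> z \<in> A \<Longrightarrow>
   le z (meet A le x y) \<longleftrightarrow> le z x \<and> le z y"
proof -
  assume c: "complete_lattice_on A le" and x: "x \<in> A" and y: "y \<in> A" and z: "z \<in> A"
  note m = meet_props[OF c x y]
  show ?thesis
  proof
    assume "le z (meet A le x y)"
    then show "le z x \<and> le z y"
      using poset_trans[OF cl_poset[OF c] z m(1) x _ m(2)] poset_trans[OF cl_poset[OF c] z m(1) y _ m(3)] by blast
  next
    assume "le z x \<and> le z y" then show "le z (meet A le x y)" using m(4)[OF z] by blast
  qed
qed

lemma meet_top: "complete_lattice_on A le \<Longrightarrow> x \<in> A \<Longrightarrow> meet A le x (top_of A le) = x"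
proof -
  assume c: "complete_lattice_on A le" and x: "x \<in> A"
  show ?thesis using meet_absorb[OF c x top_props(1)[OF c] top_props(2)[OF c x]] .
qed

lemma le_iff_meet: "complete_lattice_on A le \<Longrightarrow> x \<in> A \<Longrightarrow> y \<in> A \<Longrightarrow> le x y \<longleftrightarrow> meet A le x y = x"
proof -
  assume c: "complete_lattice_on A le" and x: "x \<in> A" and y: "y \<in> A"
  show ?thesis
  proof
    assume "le x y" then show "meet A le x y = x" using meet_absorb[OF c x y] by blast
  next
    assume e: "meet A le x y = x" show "le x y" using meet_props(3)[OF c x y] unfolding e .
  qed
qed

lemma meet_assoc:
  assumes c: "complete_lattice_on A le" and x: "x \<in> A" and y: "y \<in> A" and z: "z \<in> A"
  shows "meet A le (meet A le x y) z = meet A le x (meet A le y z)"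
proof -
  have p: "poset_on A le" using cl_poset[OF c] .
  define yz where "yz = meet A le y z"
  define xy where "xy = meet A le x y"
  define m where "m = meet A le x yz"
  have yzA: "yz \<in> A" and yzy: "le yz y" and yzz: "le yz z"
    using meet_props[OF c y z] unfolding yz_def by auto
  have xyA: "xy \<in> A" and xyx: "le xy x" and xyy: "le xy y"
    using meet_props[OF c x y] unfolding xy_def by auto
  have mA: "m \<in> A" and mx: "le m x" and myz: "le m yz"
    using meet_props[OF c x yzA] unfolding m_def by auto
  have my: "le m y" using poset_trans[OF p mA yzA y myz yzy] .
  have mz: "le m z" using poset_trans[OF p mA yzA z myz yzz] .
  have mxy: "le m xy" unfolding xy_def using meet_props(4)[OF c x y mA mx my] .
  have "meet A le xy z = m"
  proof (rule meet_eqI[OF p mA mxy mz])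
    fix w assume w: "w \<in> A" "le w xy" "le w z"
    have wx: "le w x" using poset_trans[OF p w(1) xyA x w(2) xyx] .
    have wy: "le w y" using poset_trans[OF p w(1) xyA y w(2) xyy] .
    have wyz: "le w yz" unfolding yz_def using meet_props(4)[OF c y z w(1) wy w(3)] .
    show "le w m" unfolding m_def using meet_props(4)[OF c x yzA w(1) wx wyz] .
  qed
  then show ?thesis unfolding m_def xy_def yz_def .
qed

lemma meet_mono: "complete_lattice_on A le \<Longrightarrow> x \<in> A \<Longrightarrow> y \<in> A \<Longrightarrow> z \<in> A \<Longrightarrow> le x y \<Longrightarrow>
  le (meet A le x z) (meet A le y z)"
proof -
  assume c: "complete_lattice_on A le" and x: "x \<in> A" and y: "y \<in> A" and z: "z \<in> A" and xy: "le x y"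
  note m = meet_props[OF c x z]
  have "le (meet A le x z) y" using poset_trans[OF cl_poset[OF c] m(1) x y m(2) xy] .
  then show ?thesis using meet_props(4)[OF c y z m(1)] m(3) by blast
qed

lemma frame_cl: "frame_on A le \<Longrightarrow> complete_lattice_on A le"
  unfolding frame_on_def by blast

lemma frame_distr: "frame_on A le \<Longrightarrow> x \<in> A \<Longrightarrow> S \<subseteq> A \<Longrightarrow>
   meet A le x (lub A le S) = lub A le ((\<lambda>s. meet A le x s) ` S)"
  unfolding frame_on_def by blast

lemma down_poset: "poset_on A le \<Longrightarrow> poset_on {x\<in>A. le x a} le"
  unfolding poset_on_def by blast

lemma down_lub:
  assumes c: "complete_lattice_on A le" and a: "a \<in> A" and S: "S \<subseteq> {x\<in>A. le x a}"
  shows "lub {x\<in>A. le x a} le S = lub A le S"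
proof (rule lub_eqI[OF down_poset[OF cl_poset[OF c]]])
  have SA: "S \<subseteq> A" using S by blast
  show "lub A le S \<in> {x \<in> A. le x a}" using cl_lub_in[OF c SA] cl_lub_least[OF c SA a] S by blast
  show "\<And>s. s \<in> S \<Longrightarrow> le s (lub A le S)" using cl_lub_upper[OF c SA] .
  show "\<And>y. y \<in> {x \<in> A. le x a} \<Longrightarrow> (\<And>s. s \<in> S \<Longrightarrow> le s y) \<Longrightarrow> le (lub A le S) y"
    using cl_lub_least[OF c SA] by blast
qed

lemma down_meet:
  assumes c: "complete_lattice_on A le" and a: "a \<in> A" and x: "x \<in> {x\<in>A. le x a}" and y: "y \<in> {x\<in>A. le x a}"
  shows "meet {x\<in>A. le x a} le x y = meet A le x y"
proof (rule meet_eqI[OF down_poset[OF cl_poset[OF c]]])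
  show "meet A le x y \<in> {x \<in> A. le x a}" using meet_props[OF c, of x y] x y
    using poset_trans[OF cl_poset[OF c] meet_props(1)[OF c, of x y] _ a meet_props(2)[OF c, of x y]] by blast
qed (use meet_props[OF c, of x y] x y in auto)

lemma down_top:
  assumes c: "complete_lattice_on A le" and a: "a \<in> A"
  shows "top_of {x\<in>A. le x a} le = a"
  by (rule top_eqI[OF down_poset[OF cl_poset[OF c]]]) (auto simp: a poset_refl[OF cl_poset[OF c] a])

lemma down_cl:
  assumes c: "complete_lattice_on A le" and a: "a \<in> A"
  shows "complete_lattice_on {x\<in>A. le x a} le"
  unfolding complete_lattice_on_def
proof (intro conjI allI impI)
  show "poset_on {x \<in> A. le x a} le" by (rule down_poset[OF cl_poset[OF c]])
  fix S assume S: "S \<subseteq> {x \<in> A. le x a}"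
  have SA: "S \<subseteq> A" using S by blast
  have "is_lub {x\<in>A. le x a} le S (lub {x\<in>A. le x a} le S)"
    unfolding down_lub[OF c a S]
    using cl_is_lub[OF c SA] S cl_lub_least[OF c SA a] unfolding is_lub_def by auto
  then show "\<exists>x. is_lub {x \<in> A. le x a} le S x" by blast
qed

lemma down_frame:
  assumes f: "frame_on A le" and a: "a \<in> A"
  shows "frame_on {x\<in>A. le x a} le"
  unfolding frame_on_def
proof (intro conjI ballI allI impI)
  have c: "complete_lattice_on A le" using frame_cl[OF f] .
  show "complete_lattice_on {x \<in> A. le x a} le" by (rule down_cl[OF c a])
  fix x S assume x: "x \<in> {x \<in> A. le x a}" and S: "S \<subseteq> {x \<in> A. le x a}"
  have SA: "S \<subseteq> A" using S by blast
  have l: "lub {x\<in>A. le x a} le S \<in> {x\<in>A. le x a}"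
    using cl_lub_in[OF down_cl[OF c a] S] .
  have e1: "(\<lambda>s. meet {x \<in> A. le x a} le x s) ` S = (\<lambda>s. meet A le x s) ` S"
  proof (rule image_cong[OF refl])
    fix s assume "s \<in> S" then have "s \<in> {x \<in> A. le x a}" using S by blast
    then show "meet {x \<in> A. le x a} le x s = meet A le x s" by (rule down_meet[OF c a x])
  qed
  have sub: "(\<lambda>s. meet A le x s) ` S \<subseteq> {x \<in> A. le x a}"
  proof
    fix t assume "t \<in> (\<lambda>s. meet A le x s) ` S"
    then obtain s where s: "s \<in> S" and t: "t = meet A le x s" by blast
    have sA: "s \<in> A" using s S by blast
    have xA: "x \<in> A" and xa: "le x a" using x by auto
    have "t \<in> A" "le t x" using meet_props[OF c xA sA] t by auto
    then show "t \<in> {x \<in> A. le x a}" using poset_trans[OF cl_poset[OF c] _ xA a _ xa] by blast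
  qed
  show "meet {x \<in> A. le x a} le x (lub {x \<in> A. le x a} le S) =
        lub {x \<in> A. le x a} le ((\<lambda>s. meet {x \<in> A. le x a} le x s) ` S)"
  proof -
    have "meet {x \<in> A. le x a} le x (lub {x \<in> A. le x a} le S) = meet A le x (lub {x \<in> A. le x a} le S)"
      by (rule down_meet[OF c a x l])
    also have "\<dots> = meet A le x (lub A le S)" unfolding down_lub[OF c a S] ..
    also have "\<dots> = lub A le ((\<lambda>s. meet A le x s) ` S)" using frame_distr[OF f _ SA] x by blast
    also have "\<dots> = lub {x \<in> A. le x a} le ((\<lambda>s. meet A le x s) ` S)" unfolding down_lub[OF c a sub] ..
    finally show ?thesis unfolding e1 .
  qed
qed

lemma hom_mono:
  assumes cA: "complete_lattice_on A le" and cB: "complete_lattice_on B le'"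
    and h: "frame_hom A le B le' h" and x: "x \<in> A" and y: "y \<in> A" and xy: "le x y"
  shows "le' (h x) (h y)"
proof -
  have "h x = h (meet A le x y)" using meet_absorb[OF cA x y xy] by simp
  also have "\<dots> = meet B le' (h x) (h y)" using h x y unfolding frame_hom_def by blast
  moreover have "h x \<in> B" "h y \<in> B" using h x y unfolding frame_hom_def by auto
  ultimately show ?thesis using meet_props(3)[OF cB, of "h x" "h y"] by simp
qed

lemma ladj_eqI:
  assumes p: "poset_on (F u) (le u)" and x0: "x0 \<in> F u" and a: "le v y (res u v x0)"
    and m: "\<And>z. z \<in> F u \<Longrightarrow> le v y (res u v z) \<Longrightarrow> le u x0 z"
  shows "ladj F le res v u y = x0"
  unfolding ladj_def
proof (rule the_equality)
  show "x0 \<in> F u \<and> le v y (res u v x0) \<and> (\<forall>z\<in>F u. le v y (res u v z) \<longrightarrow> le u x0 z)"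
    using x0 a m by blast
  fix x assume x: "x \<in> F u \<and> le v y (res u v x) \<and> (\<forall>z\<in>F u. le v y (res u v z) \<longrightarrow> le u x z)"
  have "le u x x0" using x x0 a by blast
  moreover have "le u x0 x" using m x by blast
  ultimately show "x = x0" using poset_antisym[OF p] x x0 by blast
qed

locale phi_ctx =
  fixes Opn :: "'o set" and leO and L :: "'a set" and leL and f
  assumes X: "frame_on Opn leO" and L: "frame_on L leL" and f: "frame_hom Opn leO L leL f"
begin

lemma cX: "complete_lattice_on Opn leO" using frame_cl[OF X] .
lemma cL: "complete_lattice_on L leL" using frame_cl[OF L] .
lemma pL: "poset_on L leL" using cl_poset[OF cL] .
lemma f_in: "u \<in> Opn \<Longrightarrow> f u \<in> L" using f unfolding frame_hom_def by blast
lemma f_mono: "u \<in> Opn \<Longrightarrow> v \<in> Opn \<Longrightarrow> leO v u \<Longrightarrow> leL (f v) (f u)"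
  using hom_mono[OF cX cL f] .
lemma f_meet: "u \<in> Opn \<Longrightarrow> v \<in> Opn \<Longrightarrow> f (meet Opn leO u v) = meet L leL (f u) (f v)"
  using f unfolding frame_hom_def by blast
lemma f_lub: "U \<subseteq> Opn \<Longrightarrow> f (lub Opn leO U) = lub L leL (f ` U)"
  using f unfolding frame_hom_def by blast
lemma f_top: "f (top_of Opn leO) = top_of L leL"
  using f unfolding frame_hom_def by blast

abbreviation "P \<equiv> phi_F L leL f"
abbreviation "R \<equiv> phi_res L leL f"

lemma P_def: "P u = {x\<in>L. leL x (f u)}" by (simp add: phi_F_def)
lemma R_def: "R u v x = meet L leL x (f v)" by (simp add: phi_res_def)

lemma P_in: "x \<in> P u \<Longrightarrow> x \<in> L" by (simp add: phi_F_def)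
lemma P_le: "x \<in> P u \<Longrightarrow> leL x (f u)" by (simp add: phi_F_def)

lemma transL: "x \<in> L \<Longrightarrow> y \<in> L \<Longrightarrow> z \<in> L \<Longrightarrow> leL x y \<Longrightarrow> leL y z \<Longrightarrow> leL x z"
  using poset_trans[OF pL] by blast

lemma P_mono: "u \<in> Opn \<Longrightarrow> v \<in> Opn \<Longrightarrow> leO v u \<Longrightarrow> y \<in> P v \<Longrightarrow> y \<in> P u"
proof -
  assume u: "u \<in> Opn" and v: "v \<in> Opn" and vu: "leO v u" and y: "y \<in> P v"
  have "leL y (f u)" using transL[OF P_in[OF y] f_in[OF v] f_in[OF u] P_le[OF y] f_mono[OF u v vu]] .
  then show "y \<in> P u" using P_in[OF y] unfolding P_def by blast
qed

lemma R_in: "u \<in> Opn \<Longrightarrow> v \<in> Opn \<Longrightarrow> x \<in> P u \<Longrightarrow> R u v x \<in> P v"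
proof -
  assume u: "u \<in> Opn" and v: "v \<in> Opn" and x: "x \<in> P u"
  note m = meet_props[OF cL P_in[OF x] f_in[OF v]]
  show "R u v x \<in> P v" unfolding R_def P_def using m(1) m(3) by blast
qed

lemma ladjP: "u \<in> Opn \<Longrightarrow> v \<in> Opn \<Longrightarrow> leO v u \<Longrightarrow> y \<in> P v \<Longrightarrow>
   ladj P (phi_le leL) R v u y = y"
proof (rule ladj_eqI)
  assume u: "u \<in> Opn" and v: "v \<in> Opn" and vu: "leO v u" and y: "y \<in> P v"
  show "poset_on (P u) (phi_le leL u)" unfolding P_def phi_le_def by (rule down_poset[OF pL])
  show "y \<in> P u" using P_mono[OF u v vu y] .
  have "R u v y = y" unfolding R_def using meet_absorb[OF cL P_in[OF y] f_in[OF v] P_le[OF y]] .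
  then show "phi_le leL v y (R u v y)" unfolding phi_le_def using poset_refl[OF pL P_in[OF y]] by simp
  show "\<And>z. z \<in> P u \<Longrightarrow> phi_le leL v y (R u v z) \<Longrightarrow> phi_le leL u y z"
    unfolding phi_le_def R_def using meet_le_iff[OF cL _ f_in[OF v] P_in[OF y]] P_in by blast
qed

lemma meetL_in: "x \<in> L \<Longrightarrow> y \<in> L \<Longrightarrow> meet L leL x y \<in> L" using meet_props[OF cL] by blast

lemma phi_presheaf: "presheaf_on Opn leO P R"
  unfolding presheaf_on_def
proof (intro conjI ballI impI)
  show "\<And>u v x. u \<in> Opn \<Longrightarrow> v \<in> Opn \<Longrightarrow> leO v u \<Longrightarrow> x \<in> P u \<Longrightarrow> R u v x \<in> P v"
    using R_in by blast
  show "\<And>u x. u \<in> Opn \<Longrightarrow> x \<in> P u \<Longrightarrow> R u u x = x"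
    unfolding R_def using meet_absorb[OF cL] f_in P_in P_le by blast
  fix u v w x assume u: "u \<in> Opn" and v: "v \<in> Opn" and w: "w \<in> Opn" and le: "leO w v \<and> leO v u"
    and x: "x \<in> P u"
  have "meet L leL (f v) (f w) = f w"
    using meet_comm[of L leL "f v" "f w"] meet_absorb[OF cL f_in[OF w] f_in[OF v] f_mono[OF v w]] le by simp
  then show "R v w (R u v x) = R u w x" unfolding R_def
    using meet_assoc[OF cL P_in[OF x] f_in[OF v] f_in[OF w]] by simp
qed

lemma phi_glue:
  assumes u: "u \<in> Opn" and U: "U \<subseteq> Opn" and lu: "lub Opn leO U = u"
    and s: "\<forall>w\<in>U. s w \<in> P w"
    and comp: "\<forall>w\<in>U. \<forall>w'\<in>U. R w (meet Opn leO w w') (s w) = R w' (meet Opn leO w w') (s w')"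
  shows "\<exists>!x. x \<in> P u \<and> (\<forall>w\<in>U. R u w x = s w)"
proof -
  have sL: "\<And>w. w \<in> U \<Longrightarrow> s w \<in> L" using s P_in by blast
  have sle: "\<And>w. w \<in> U \<Longrightarrow> leL (s w) (f w)" using s P_le by blast
  have wu: "\<And>w. w \<in> U \<Longrightarrow> leO w u" using cl_lub_upper[OF cX U] lu by blast
  have fu: "f u = lub L leL (f ` U)" using f_lub[OF U] lu by simp
  have sU: "s ` U \<subseteq> L" using sL by blast
  define x where "x = lub L leL (s ` U)"
  have xL: "x \<in> L" unfolding x_def using cl_lub_in[OF cL sU] .
  have xle: "leL x (f u)" unfolding x_def
  proof (rule cl_lub_least[OF cL sU f_in[OF u]])
    fix t assume "t \<in> s ` U"
    then obtain w where w: "w \<in> U" and t: "t = s w" by blast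
    have wO: "w \<in> Opn" using w U by blast
    show "leL t (f u)" unfolding t using transL[OF sL[OF w] f_in[OF wO] f_in[OF u] sle[OF w] f_mono[OF u wO wu[OF w]]] .
  qed
  have res: "meet L leL x (f w) = s w" if w: "w \<in> U" for w
  proof -
    have wO: "w \<in> Opn" using w U by blast
    have "meet L leL x (f w) = meet L leL (f w) x" by (rule meet_comm)
    also have "\<dots> = lub L leL ((\<lambda>z. meet L leL (f w) z) ` (s ` U))"
      unfolding x_def using frame_distr[OF L f_in[OF wO] sU] .
    also have "\<dots> = s w"
    proof (rule lub_eqI[OF pL sL[OF w]])
      fix t assume "t \<in> (\<lambda>z. meet L leL (f w) z) ` (s ` U)"
      then obtain w' where w': "w' \<in> U" and t: "t = meet L leL (f w) (s w')" by blast
      have w'O: "w' \<in> Opn" using w' U by blast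
      have "t = meet L leL (s w') (f w)" using t meet_comm[of L leL "f w" "s w'"] by simp
      also have "\<dots> = meet L leL (meet L leL (s w') (f w')) (f w)"
        using meet_absorb[OF cL sL[OF w'] f_in[OF w'O] sle[OF w']] by simp
      also have "\<dots> = meet L leL (s w') (f (meet Opn leO w' w))"
        using meet_assoc[OF cL sL[OF w'] f_in[OF w'O] f_in[OF wO]] f_meet[OF w'O wO] by simp
      also have "\<dots> = meet L leL (s w) (f (meet Opn leO w' w))"
        using bspec[OF bspec[OF comp w'] w] unfolding R_def .
      finally show "leL t (s w)"
        using meet_props(2)[OF cL sL[OF w] f_in[OF meet_props(1)[OF cX w'O wO]]] by simp
    next
      fix y assume y: "y \<in> L" and ub: "\<And>t. t \<in> (\<lambda>z. meet L leL (f w) z) ` (s ` U) \<Longrightarrow> leL t y"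
      have "meet L leL (f w) (s w) = s w"
        using meet_comm[of L leL "f w" "s w"] meet_absorb[OF cL sL[OF w] f_in[OF wO] sle[OF w]] by simp
      moreover have "meet L leL (f w) (s w) \<in> (\<lambda>z. meet L leL (f w) z) ` (s ` U)" using w by blast
      ultimately show "leL (s w) y" using ub by simp
    qed
    finally show ?thesis .
  qed
  show ?thesis
  proof (rule ex1I[of _ x])
    show "x \<in> P u \<and> (\<forall>w\<in>U. R u w x = s w)" using xL xle res unfolding P_def R_def by blast
  next
    fix y assume y: "y \<in> P u \<and> (\<forall>w\<in>U. R u w y = s w)"
    have yL: "y \<in> L" using y P_in by blast
    have fU: "f ` U \<subseteq> L" using f_in U by blast
    have "y = meet L leL y (f u)" using meet_absorb[OF cL yL f_in[OF u]] y P_le by simp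
    also have "\<dots> = lub L leL ((\<lambda>z. meet L leL y z) ` (f ` U))"
      unfolding fu using frame_distr[OF L yL fU] .
    also have "(\<lambda>z. meet L leL y z) ` (f ` U) = s ` U"
      using y unfolding R_def image_image by (intro image_cong) simp_all
    finally show "y = x" unfolding x_def .
  qed
qed

lemma phi_sheaf: "sheaf_on Opn leO P R"
  unfolding sheaf_on_def using phi_presheaf phi_glue by blast

lemma phi_pos3:
  assumes u: "u \<in> Opn" and U: "U \<subseteq> Opn" and lu: "lub Opn leO U = u"
    and s: "s \<in> P u" and t: "t \<in> P u" and h: "\<forall>w\<in>U. leL (R u w s) (R u w t)"
  shows "leL s t"
proof -
  have fu: "f u = lub L leL (f ` U)" using f_lub[OF U] lu by simp
  have sL: "s \<in> L" and tL: "t \<in> L" using P_in[OF s] P_in[OF t] .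
  have fU: "f ` U \<subseteq> L" using f_in U by blast
  have "s = meet L leL s (f u)" using meet_absorb[OF cL sL f_in[OF u] P_le[OF s]] by simp
  then have es: "s = lub L leL ((\<lambda>z. meet L leL s z) ` (f ` U))"
    unfolding fu frame_distr[OF L sL fU] .
  have "t = meet L leL t (f u)" using meet_absorb[OF cL tL f_in[OF u] P_le[OF t]] by simp
  then have et: "t = lub L leL ((\<lambda>z. meet L leL t z) ` (f ` U))"
    unfolding fu frame_distr[OF L tL fU] .
  have s2: "(\<lambda>z. meet L leL s z) ` (f ` U) \<subseteq> L" using meetL_in sL fU by blast
  have t2: "(\<lambda>z. meet L leL t z) ` (f ` U) \<subseteq> L" using meetL_in tL fU by blast
  have "leL (lub L leL ((\<lambda>z. meet L leL s z) ` (f ` U))) (lub L leL ((\<lambda>z. meet L leL t z) ` (f ` U)))"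
  proof (rule cl_lub_least[OF cL s2 cl_lub_in[OF cL t2]])
    fix a assume "a \<in> (\<lambda>z. meet L leL s z) ` (f ` U)"
    then obtain w where w: "w \<in> U" and a: "a = meet L leL s (f w)" by blast
    have "leL (meet L leL t (f w)) (lub L leL ((\<lambda>z. meet L leL t z) ` (f ` U)))"
      using cl_lub_upper[OF cL t2] w by blast
    moreover have "leL a (meet L leL t (f w))" using h w a unfolding R_def by blast
    moreover have "f w \<in> L" using f_in U w by blast
    ultimately show "leL a (lub L leL ((\<lambda>z. meet L leL t z) ` (f ` U)))"
      using transL[OF _ meetL_in[OF tL] cl_lub_in[OF cL t2]] a meetL_in[OF sL] by blast
  qed
  then show ?thesis using es et by simp
qed

lemma phi_posheaf: "posheaf_on Opn leO P (phi_le leL) R"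
  unfolding posheaf_on_def phi_le_def
proof (intro conjI ballI impI allI)
  show "sheaf_on Opn leO P R" by (rule phi_sheaf)
  show "\<And>u. u \<in> Opn \<Longrightarrow> poset_on (P u) leL" unfolding P_def by (rule down_poset[OF pL])
  show "\<And>u v x y. u \<in> Opn \<Longrightarrow> v \<in> Opn \<Longrightarrow> leO v u \<Longrightarrow> x \<in> P u \<Longrightarrow> y \<in> P u \<Longrightarrow> leL x y \<Longrightarrow>
        leL (R u v x) (R u v y)"
    unfolding R_def using meet_mono[OF cL P_in P_in f_in] by blast
  show "\<And>u U s t. u \<in> Opn \<Longrightarrow> U \<subseteq> Opn \<Longrightarrow> lub Opn leO U = u \<Longrightarrow> s \<in> P u \<Longrightarrow> t \<in> P u \<Longrightarrow>
       \<forall>w\<in>U. leL (R u w s) (R u w t) \<Longrightarrow> leL s t"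
    using phi_pos3 by blast
qed

definition imp :: "'a \<Rightarrow> 'a \<Rightarrow> 'a" where
  "imp a b = lub L leL {c\<in>L. leL (meet L leL c a) b}"

lemma imp_in: "imp a b \<in> L" unfolding imp_def by (rule cl_lub_in[OF cL]) blast

lemma imp_iff: assumes a: "a \<in> L" and b: "b \<in> L" and x: "x \<in> L"
  shows "leL (meet L leL x a) b \<longleftrightarrow> leL x (imp a b)"
proof
  assume "leL (meet L leL x a) b" then show "leL x (imp a b)"
    unfolding imp_def using cl_lub_upper[OF cL, of "{c\<in>L. leL (meet L leL c a) b}"] x by blast
next
  assume h: "leL x (imp a b)"
  let ?C = "{c\<in>L. leL (meet L leL c a) b}"
  have C: "?C \<subseteq> L" by blast
  have "leL (meet L leL x a) (meet L leL (imp a b) a)"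
    using meet_mono[OF cL x imp_in a h] .
  also have "meet L leL (imp a b) a = lub L leL ((\<lambda>c. meet L leL a c) ` ?C)"
    unfolding imp_def using meet_comm[of L leL "lub L leL ?C" a] frame_distr[OF L a C] by simp
  finally have 1: "leL (meet L leL x a) (lub L leL ((\<lambda>c. meet L leL a c) ` ?C))"
    using pL by simp
  have C2: "(\<lambda>c. meet L leL a c) ` ?C \<subseteq> L" using meetL_in[OF a] by blast
  have 2: "leL (lub L leL ((\<lambda>c. meet L leL a c) ` ?C)) b"
  proof (rule cl_lub_least[OF cL C2 b])
    fix t assume "t \<in> (\<lambda>c. meet L leL a c) ` ?C"
    then obtain c where c: "c \<in> ?C" and t: "t = meet L leL a c" by blast
    show "leL t b" using c unfolding t meet_comm[of L leL a c] by blast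
  qed
  show "leL (meet L leL x a) b"
    using transL[OF meetL_in[OF x a] cl_lub_in[OF cL C2] b 1 2] .
qed

lemma phi_frame_sheaf: "frame_sheaf_on Opn leO P (phi_le leL) R"
  unfolding frame_sheaf_on_def
proof (intro conjI ballI impI)
  show "posheaf_on Opn leO P (phi_le leL) R" by (rule phi_posheaf)
  show "\<And>u. u \<in> Opn \<Longrightarrow> frame_on (P u) (phi_le leL u)"
    unfolding P_def phi_le_def using down_frame[OF L f_in] by blast
  fix u v assume u: "u \<in> Opn" and v: "v \<in> Opn" and vu: "leO v u"
  have fvu: "leL (f v) (f u)" using f_mono[OF u v vu] .
  have Pvu: "\<And>y. y \<in> P v \<Longrightarrow> y \<in> P u" using P_mono[OF u v vu] .
  have Ry: "\<And>y. y \<in> P v \<Longrightarrow> R u v y = y"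
    unfolding R_def using meet_absorb[OF cL P_in f_in[OF v] P_le] by blast
  show "R u v ` P u = P v"
  proof
    show "R u v ` P u \<subseteq> P v" using R_in[OF u v] by blast
    show "P v \<subseteq> R u v ` P u"
    proof
      fix y assume y: "y \<in> P v"
      show "y \<in> R u v ` P u" by (rule image_eqI[where x=y]) (use Ry[OF y] Pvu[OF y] in simp_all)
    qed
  qed
  show "\<exists>l. is_left_adjoint P (phi_le leL) R v u l"
    unfolding is_left_adjoint_def phi_le_def
  proof (rule exI[of _ "\<lambda>y. y"], intro conjI ballI)
    fix y assume y: "y \<in> P v" then show "y \<in> P u" by (rule Pvu)
    fix x assume x: "x \<in> P u"
    show "leL y x = leL y (R u v x)"
      unfolding R_def using meet_le_iff[OF cL P_in[OF x] f_in[OF v] P_in[OF y]] P_le[OF y] by blast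
  qed
  show "\<exists>r. is_right_adjoint P (phi_le leL) R v u r"
    unfolding is_right_adjoint_def phi_le_def
  proof (rule exI[of _ "\<lambda>y. meet L leL (f u) (imp (f v) y)"], intro conjI ballI)
    fix y assume y: "y \<in> P v"
    show "meet L leL (f u) (imp (f v) y) \<in> P u"
      unfolding P_def using meet_props[OF cL f_in[OF u] imp_in] by blast
  next
    fix x y assume x: "x \<in> P u" and y: "y \<in> P v"
    show "leL (R u v x) y = leL x (meet L leL (f u) (imp (f v) y))"
      unfolding R_def using imp_iff[OF f_in[OF v] P_in[OF y] P_in[OF x]]
        meet_le_iff[OF cL f_in[OF u] imp_in P_in[OF x]] P_le[OF x] by blast
  qed
  show "\<And>x y. x \<in> P u \<Longrightarrow> y \<in> P v \<Longrightarrow>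
      meet (P u) (phi_le leL u) x (ladj P (phi_le leL) R v u y) =
      ladj P (phi_le leL) R v u (meet (P v) (phi_le leL v) (R u v x) y)"
  proof -
    fix x y assume x: "x \<in> P u" and y: "y \<in> P v"
    have Rx: "R u v x \<in> P v" using R_in[OF u v x] .
    have m1: "meet (P v) leL (R u v x) y = meet L leL (R u v x) y"
      unfolding P_def by (rule down_meet[OF cL f_in[OF v]]) (use Rx y in \<open>simp_all add: P_def\<close>)
    have mv: "meet L leL (R u v x) y \<in> P v"
      unfolding P_def using meet_props(1,3)[OF cL P_in[OF Rx] P_in[OF y]] P_le[OF y] f_in[OF v]
        transL[OF meetL_in[OF P_in[OF Rx] P_in[OF y]] P_in[OF y] f_in[OF v]] by blast
    have m2: "meet (P u) leL x y = meet L leL x y"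
      unfolding P_def by (rule down_meet[OF cL f_in[OF u]]) (use x Pvu[OF y] in \<open>simp_all add: P_def\<close>)
    have "meet L leL (R u v x) y = meet L leL x (meet L leL (f v) y)"
      unfolding R_def using meet_assoc[OF cL P_in[OF x] f_in[OF v] P_in[OF y]] .
    also have "meet L leL (f v) y = y"
      using meet_absorb[OF cL P_in[OF y] f_in[OF v] P_le[OF y]] unfolding meet_comm[of L leL y] .
    finally have e: "meet L leL (R u v x) y = meet L leL x y" .
    show "meet (P u) (phi_le leL u) x (ladj P (phi_le leL) R v u y) =
      ladj P (phi_le leL) R v u (meet (P v) (phi_le leL v) (R u v x) y)"
    proof -
      have q: "meet (P v) (phi_le leL v) (R u v x) y = meet L leL (R u v x) y" using m1 unfolding phi_le_def .
      have q2: "meet (P u) (phi_le leL u) x y = meet L leL x y" using m2 unfolding phi_le_def .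
      show ?thesis unfolding q ladjP[OF u v vu y] q2 unfolding ladjP[OF u v vu mv] unfolding e ..
    qed
  qed
qed

end

context phi_ctx begin

abbreviation "T \<equiv> top_of Opn leO"

lemma T_in: "T \<in> Opn" using top_props(1)[OF cX] .
lemma le_T: "u \<in> Opn \<Longrightarrow> leO u T" using top_props(2)[OF cX] .

lemma P_T: "P T = L"
proof
  show "P T \<subseteq> L" using P_in by blast
  show "L \<subseteq> P T"
  proof
    fix x assume x: "x \<in> L"
    have "leL x (f T)" unfolding f_top using top_props(2)[OF cL x] .
    then show "x \<in> P T" unfolding P_def using x by blast
  qed
qed

lemma top_P: "u \<in> Opn \<Longrightarrow> top_of (P u) (phi_le leL u) = f u"
  unfolding phi_le_def P_def using down_top[OF cL f_in] by blast

lemma psi_phi: "u \<in> Opn \<Longrightarrow> psi_hom Opn leO P (phi_le leL) R u = f u"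
proof -
  assume u: "u \<in> Opn"
  have fu: "f u \<in> P u" unfolding P_def using f_in[OF u] poset_refl[OF pL f_in[OF u]] by blast
  show ?thesis unfolding psi_hom_def top_P[OF u] using ladjP[OF T_in u le_T[OF u] fu] .
qed

lemma id_hom: "frame_hom L leL L leL (\<lambda>x. x)"
  unfolding frame_hom_def by simp

lemma eta1: "coslice_mor Opn leO L leL f (P T) (phi_le leL T) (psi_hom Opn leO P (phi_le leL) R) (\<lambda>x. x)"
  unfolding coslice_mor_def P_T using id_hom psi_phi unfolding phi_le_def by simp

lemma eta2: "coslice_mor Opn leO (P T) (phi_le leL T) (psi_hom Opn leO P (phi_le leL) R) L leL f (\<lambda>x. x)"
  unfolding coslice_mor_def P_T using id_hom psi_phi unfolding phi_le_def by simp

end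

lemma phi_mor_ok:
  assumes A: "phi_ctx Opn leO L leL f" and B: "phi_ctx Opn leO M leM g"
    and hm: "coslice_mor Opn leO L leL f M leM g h"
  shows "frame_morphism Opn leO (phi_F L leL f) (phi_le leL) (phi_res L leL f)
                             (phi_F M leM g) (phi_le leM) (phi_res M leM g) (phi_mor h)"
proof -
  interpret A: phi_ctx Opn leO L leL f by (rule A)
  interpret B: phi_ctx Opn leO M leM g by (rule B)
  have h: "frame_hom L leL M leM h" and hf: "\<And>u. u \<in> Opn \<Longrightarrow> h (f u) = g u"
    using hm unfolding coslice_mor_def by blast+
  have h_in: "\<And>x. x \<in> L \<Longrightarrow> h x \<in> M" using h unfolding frame_hom_def by blast
  have h_meet: "\<And>x y. x \<in> L \<Longrightarrow> y \<in> L \<Longrightarrow> h (meet L leL x y) = meet M leM (h x) (h y)"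
    using h unfolding frame_hom_def by blast
  have h_lub: "\<And>S. S \<subseteq> L \<Longrightarrow> h (lub L leL S) = lub M leM (h ` S)"
    using h unfolding frame_hom_def by blast
  have hP: "\<And>u x. u \<in> Opn \<Longrightarrow> x \<in> A.P u \<Longrightarrow> h x \<in> B.P u"
  proof -
    fix u x assume u: "u \<in> Opn" and x: "x \<in> A.P u"
    have "leM (h x) (h (f u))" using hom_mono[OF A.cL B.cL h A.P_in[OF x] A.f_in[OF u] A.P_le[OF x]] .
    then show "h x \<in> B.P u" unfolding B.P_def using hf[OF u] h_in[OF A.P_in[OF x]] by simp
  qed
  show ?thesis
    unfolding frame_morphism_def phi_mor_def
  proof (intro conjI ballI impI)
    show "\<And>u x. u \<in> Opn \<Longrightarrow> x \<in> A.P u \<Longrightarrow> h x \<in> B.P u" by (rule hP)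
    show "\<And>u v x. u \<in> Opn \<Longrightarrow> v \<in> Opn \<Longrightarrow> leO v u \<Longrightarrow> x \<in> A.P u \<Longrightarrow> B.R u v (h x) = h (A.R u v x)"
      unfolding A.R_def B.R_def using h_meet A.P_in A.f_in hf by simp
    show "\<And>u v y. u \<in> Opn \<Longrightarrow> v \<in> Opn \<Longrightarrow> leO v u \<Longrightarrow> y \<in> A.P v \<Longrightarrow>
       h (ladj A.P (phi_le leL) A.R v u y) = ladj B.P (phi_le leM) B.R v u (h y)"
    proof -
      fix u v y assume u: "u \<in> Opn" and v: "v \<in> Opn" and vu: "leO v u" and y: "y \<in> A.P v"
      show "h (ladj A.P (phi_le leL) A.R v u y) = ladj B.P (phi_le leM) B.R v u (h y)"
        unfolding A.ladjP[OF u v vu y] B.ladjP[OF u v vu hP[OF v y]] ..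
    qed
    fix u assume u: "u \<in> Opn"
    show "frame_hom (A.P u) (phi_le leL u) (B.P u) (phi_le leM u) h"
      unfolding frame_hom_def phi_le_def
    proof (intro conjI ballI allI impI)
      show "\<And>x. x \<in> A.P u \<Longrightarrow> h x \<in> B.P u" using hP[OF u] .
      show "h (top_of (A.P u) leL) = top_of (B.P u) leM"
        unfolding A.P_def B.P_def down_top[OF A.cL A.f_in[OF u]] down_top[OF B.cL B.f_in[OF u]]
        using hf[OF u] .
      fix x y assume x: "x \<in> A.P u" and y: "y \<in> A.P u"
      show "h (meet (A.P u) leL x y) = meet (B.P u) leM (h x) (h y)"
        using down_meet[OF A.cL A.f_in[OF u] x[unfolded A.P_def] y[unfolded A.P_def]]
          down_meet[OF B.cL B.f_in[OF u] hP[OF u x, unfolded B.P_def] hP[OF u y, unfolded B.P_def]]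
          h_meet[OF A.P_in[OF x] A.P_in[OF y]] unfolding A.P_def B.P_def by simp
    next
      fix S assume S: "S \<subseteq> A.P u"
      have hS: "h ` S \<subseteq> B.P u" using hP[OF u] S by blast
      have SL: "S \<subseteq> L" using S A.P_in by blast
      show "h (lub (A.P u) leL S) = lub (B.P u) leM (h ` S)"
        using down_lub[OF A.cL A.f_in[OF u] S[unfolded A.P_def]]
          down_lub[OF B.cL B.f_in[OF u] hS[unfolded B.P_def]] h_lub[OF SL]
        unfolding A.P_def B.P_def by simp
    qed
  qed
qed

locale fs_ctx =
  fixes Opn :: "'o set" and leO and F :: "'o \<Rightarrow> 'a set" and le and res
  assumes X: "frame_on Opn leO" and FS: "frame_sheaf_on Opn leO F le res"
begin

lemma cX: "complete_lattice_on Opn leO" using frame_cl[OF X] .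
abbreviation "T \<equiv> top_of Opn leO"
lemma T_in: "T \<in> Opn" using top_props(1)[OF cX] .
lemma le_T: "u \<in> Opn \<Longrightarrow> leO u T" using top_props(2)[OF cX] .

lemma PS: "posheaf_on Opn leO F le res" using FS unfolding frame_sheaf_on_def by (rule conjunct1)
lemma sheaf: "sheaf_on Opn leO F res" using PS unfolding posheaf_on_def by (rule conjunct1)
lemma presheaf: "presheaf_on Opn leO F res" using sheaf unfolding sheaf_on_def by (rule conjunct1)

lemma PS2: "\<forall>u\<in>Opn. poset_on (F u) (le u)"
  using PS unfolding posheaf_on_def by (elim conjE)
lemma PS3: "\<forall>u\<in>Opn. \<forall>v\<in>Opn. leO v u \<longrightarrow>
        (\<forall>x\<in>F u. \<forall>y\<in>F u. le u x y \<longrightarrow> le v (res u v x) (res u v y))"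
  using PS unfolding posheaf_on_def by (elim conjE)
lemma PS4: "\<forall>u\<in>Opn. \<forall>U\<subseteq>Opn. lub Opn leO U = u \<longrightarrow>
        (\<forall>s\<in>F u. \<forall>t\<in>F u. (\<forall>w\<in>U. le w (res u w s) (res u w t)) \<longrightarrow> le u s t)"
  using PS unfolding posheaf_on_def by (elim conjE)
lemma FS2: "\<forall>u\<in>Opn. frame_on (F u) (le u)"
  using FS unfolding frame_sheaf_on_def by (elim conjE)
lemma FS3: "\<forall>u\<in>Opn. \<forall>v\<in>Opn. leO v u \<longrightarrow>
        res u v ` F u = F v \<and>
        (\<exists>l. is_left_adjoint F le res v u l) \<and>
        (\<exists>r. is_right_adjoint F le res v u r) \<and>
        (\<forall>x\<in>F u. \<forall>y\<in>F v.
           meet (F u) (le u) x (ladj F le res v u y) =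
           ladj F le res v u (meet (F v) (le v) (res u v x) y))"
  using FS unfolding frame_sheaf_on_def by (elim conjE)
lemma SH2: "\<forall>u\<in>Opn. \<forall>U\<subseteq>Opn. lub Opn leO U = u \<longrightarrow>
        (\<forall>s. (\<forall>w\<in>U. s w \<in> F w) \<and>
             (\<forall>w\<in>U. \<forall>w'\<in>U. res w (meet Opn leO w w') (s w) = res w' (meet Opn leO w w') (s w'))
           \<longrightarrow> (\<exists>!x. x \<in> F u \<and> (\<forall>w\<in>U. res u w x = s w)))"
  using sheaf unfolding sheaf_on_def by (elim conjE)
lemma PR1: "\<forall>u\<in>Opn. \<forall>v\<in>Opn. leO v u \<longrightarrow> (\<forall>x\<in>F u. res u v x \<in> F v)"
  using presheaf unfolding presheaf_on_def by (elim conjE)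
lemma PR2: "\<forall>u\<in>Opn. \<forall>x\<in>F u. res u u x = x"
  using presheaf unfolding presheaf_on_def by (elim conjE)
lemma PR3: "\<forall>u\<in>Opn. \<forall>v\<in>Opn. \<forall>w\<in>Opn. leO w v \<and> leO v u \<longrightarrow>
        (\<forall>x\<in>F u. res v w (res u v x) = res u w x)"
  using presheaf unfolding presheaf_on_def by (elim conjE)

lemma pos: "u \<in> Opn \<Longrightarrow> poset_on (F u) (le u)" using bspec[OF PS2] .
lemma frm: "u \<in> Opn \<Longrightarrow> frame_on (F u) (le u)" using bspec[OF FS2] .
lemma cF: "u \<in> Opn \<Longrightarrow> complete_lattice_on (F u) (le u)" using frame_cl[OF frm] .

lemma res_in: "u \<in> Opn \<Longrightarrow> v \<in> Opn \<Longrightarrow> leO v u \<Longrightarrow> x \<in> F u \<Longrightarrow> res u v x \<in> F v"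
proof -
  assume a: "u \<in> Opn" "v \<in> Opn" "leO v u" "x \<in> F u"
  show ?thesis using bspec[OF mp[OF bspec[OF bspec[OF PR1 a(1)] a(2)] a(3)] a(4)] .
qed
lemma res_id: "u \<in> Opn \<Longrightarrow> x \<in> F u \<Longrightarrow> res u u x = x"
proof -
  assume a: "u \<in> Opn" "x \<in> F u"
  show ?thesis using bspec[OF bspec[OF PR2 a(1)] a(2)] .
qed
lemma res_comp: "u \<in> Opn \<Longrightarrow> v \<in> Opn \<Longrightarrow> w \<in> Opn \<Longrightarrow> leO w v \<Longrightarrow> leO v u \<Longrightarrow> x \<in> F u \<Longrightarrow>
   res v w (res u v x) = res u w x"
proof -
  assume a: "u \<in> Opn" "v \<in> Opn" "w \<in> Opn" "leO w v" "leO v u" "x \<in> F u"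
  show ?thesis using bspec[OF mp[OF bspec[OF bspec[OF bspec[OF PR3 a(1)] a(2)] a(3)] conjI[OF a(4) a(5)]] a(6)] .
qed
lemma res_mono: "u \<in> Opn \<Longrightarrow> v \<in> Opn \<Longrightarrow> leO v u \<Longrightarrow> x \<in> F u \<Longrightarrow> y \<in> F u \<Longrightarrow> le u x y \<Longrightarrow>
   le v (res u v x) (res u v y)"
proof -
  assume a: "u \<in> Opn" "v \<in> Opn" "leO v u" "x \<in> F u" "y \<in> F u" "le u x y"
  show ?thesis using mp[OF bspec[OF bspec[OF mp[OF bspec[OF bspec[OF PS3 a(1)] a(2)] a(3)] a(4)] a(5)] a(6)] .
qed
lemma pos3: "u \<in> Opn \<Longrightarrow> U \<subseteq> Opn \<Longrightarrow> lub Opn leO U = u \<Longrightarrow> s \<in> F u \<Longrightarrow> t \<in> F u \<Longrightarrow>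
   (\<And>w. w \<in> U \<Longrightarrow> le w (res u w s) (res u w t)) \<Longrightarrow> le u s t"
proof -
  assume a: "u \<in> Opn" "U \<subseteq> Opn" "lub Opn leO U = u" "s \<in> F u" "t \<in> F u"
    and h: "\<And>w. w \<in> U \<Longrightarrow> le w (res u w s) (res u w t)"
  have 1: "\<forall>s\<in>F u. \<forall>t\<in>F u. (\<forall>w\<in>U. le w (res u w s) (res u w t)) \<longrightarrow> le u s t"
    using mp[OF mp[OF spec[OF bspec[OF PS4 a(1)], of U] a(2)] a(3)] .
  have 2: "\<forall>w\<in>U. le w (res u w s) (res u w t)" using h by blast
  show "le u s t" using mp[OF bspec[OF bspec[OF 1 a(4)] a(5)] 2] .
qed
lemma glue: "u \<in> Opn \<Longrightarrow> U \<subseteq> Opn \<Longrightarrow> lub Opn leO U = u \<Longrightarrow> (\<forall>w\<in>U. s w \<in> F w) \<Longrightarrow>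
   (\<forall>w\<in>U. \<forall>w'\<in>U. res w (meet Opn leO w w') (s w) = res w' (meet Opn leO w w') (s w')) \<Longrightarrow>
   \<exists>x. x \<in> F u \<and> (\<forall>w\<in>U. res u w x = s w)"
proof -
  assume a: "u \<in> Opn" "U \<subseteq> Opn" "lub Opn leO U = u" "\<forall>w\<in>U. s w \<in> F w"
    "\<forall>w\<in>U. \<forall>w'\<in>U. res w (meet Opn leO w w') (s w) = res w' (meet Opn leO w w') (s w')"
  have H: "\<forall>s. (\<forall>w\<in>U. s w \<in> F w) \<and>
             (\<forall>w\<in>U. \<forall>w'\<in>U. res w (meet Opn leO w w') (s w) = res w' (meet Opn leO w w') (s w'))
           \<longrightarrow> (\<exists>!x. x \<in> F u \<and> (\<forall>w\<in>U. res u w x = s w))"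
    using mp[OF mp[OF spec[OF bspec[OF SH2 a(1)], of U] a(2)] a(3)] .
  have "\<exists>!x. x \<in> F u \<and> (\<forall>w\<in>U. res u w x = s w)" using mp[OF spec[OF H, of s] conjI[OF a(4) a(5)]] .
  then show ?thesis by (rule ex1_implies_ex)
qed
lemma FS3': "u \<in> Opn \<Longrightarrow> v \<in> Opn \<Longrightarrow> leO v u \<Longrightarrow>
        res u v ` F u = F v \<and>
        (\<exists>l. is_left_adjoint F le res v u l) \<and>
        (\<exists>r. is_right_adjoint F le res v u r) \<and>
        (\<forall>x\<in>F u. \<forall>y\<in>F v.
           meet (F u) (le u) x (ladj F le res v u y) =
           ladj F le res v u (meet (F v) (le v) (res u v x) y))"
  using FS3 by simp
lemma surj: "u \<in> Opn \<Longrightarrow> v \<in> Opn \<Longrightarrow> leO v u \<Longrightarrow> res u v ` F u = F v"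
  using FS3' by blast
lemma ladj_ex: "u \<in> Opn \<Longrightarrow> v \<in> Opn \<Longrightarrow> leO v u \<Longrightarrow> \<exists>l. is_left_adjoint F le res v u l"
  using FS3' by blast
lemma radj_ex: "u \<in> Opn \<Longrightarrow> v \<in> Opn \<Longrightarrow> leO v u \<Longrightarrow> \<exists>r. is_right_adjoint F le res v u r"
  using FS3' by blast
lemma frob: "u \<in> Opn \<Longrightarrow> v \<in> Opn \<Longrightarrow> leO v u \<Longrightarrow> x \<in> F u \<Longrightarrow> y \<in> F v \<Longrightarrow>
   meet (F u) (le u) x (ladj F le res v u y) = ladj F le res v u (meet (F v) (le v) (res u v x) y)"
  using FS3'[of u v] by blast

abbreviation "lad \<equiv> ladj F le res"

lemma frefl: "u \<in> Opn \<Longrightarrow> x \<in> F u \<Longrightarrow> le u x x" using poset_refl[OF pos] .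
lemma ftrans: "u \<in> Opn \<Longrightarrow> x \<in> F u \<Longrightarrow> y \<in> F u \<Longrightarrow> z \<in> F u \<Longrightarrow> le u x y \<Longrightarrow> le u y z \<Longrightarrow> le u x z"
  using poset_trans[OF pos] by blast
lemma fantisym: "u \<in> Opn \<Longrightarrow> x \<in> F u \<Longrightarrow> y \<in> F u \<Longrightarrow> le u x y \<Longrightarrow> le u y x \<Longrightarrow> x = y"
  using poset_antisym[OF pos] by blast

lemma lad_char:
  assumes u: "u \<in> Opn" and x0: "x0 \<in> F u" and y: "y \<in> F w"
    and h: "\<And>z. z \<in> F u \<Longrightarrow> le u x0 z \<longleftrightarrow> le w y (res u w z)"
  shows "lad w u y = x0"
proof (rule ladj_eqI[where F=F and le=le and res=res and u=u and v=w and y=y, OF pos[OF u] x0])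
  show "le w y (res u w x0)" using h[OF x0] frefl[OF u x0] by blast
  show "\<And>z. z \<in> F u \<Longrightarrow> le w y (res u w z) \<Longrightarrow> le u x0 z" using h by blast
qed

lemma lad_adj:
  assumes u: "u \<in> Opn" and v: "v \<in> Opn" and vu: "leO v u" and y: "y \<in> F v"
  shows "lad v u y \<in> F u" "\<And>x. x \<in> F u \<Longrightarrow> le u (lad v u y) x \<longleftrightarrow> le v y (res u v x)"
proof -
  obtain l where l: "is_left_adjoint F le res v u l" using ladj_ex[OF u v vu] by blast
  have ly: "l y \<in> F u" using l y unfolding is_left_adjoint_def by blast
  have iff: "\<And>x. x \<in> F u \<Longrightarrow> le u (l y) x \<longleftrightarrow> le v y (res u v x)"
    using l y unfolding is_left_adjoint_def by blast
  have e: "lad v u y = l y" by (rule lad_char[OF u ly y iff])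
  show "lad v u y \<in> F u" unfolding e by (rule ly)
  show "\<And>x. x \<in> F u \<Longrightarrow> le u (lad v u y) x \<longleftrightarrow> le v y (res u v x)" unfolding e by (rule iff)
qed

lemma res_lad:
  assumes u: "u \<in> Opn" and v: "v \<in> Opn" and vu: "leO v u" and y: "y \<in> F v"
  shows "res u v (lad v u y) = y"
proof -
  note a = lad_adj[OF u v vu y]
  have r: "res u v (lad v u y) \<in> F v" using res_in[OF u v vu a(1)] .
  have 1: "le v y (res u v (lad v u y))" using a(2)[OF a(1)] frefl[OF u a(1)] by blast
  obtain z where z: "z \<in> F u" and yz: "y = res u v z" using surj[OF u v vu] y by blast
  have "le u (lad v u y) z" using a(2)[OF z] yz frefl[OF v y] by blast
  then have 2: "le v (res u v (lad v u y)) y" using res_mono[OF u v vu a(1) z] yz by simp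
  show ?thesis using fantisym[OF v r y 2 1] .
qed

lemma lad_mono:
  assumes u: "u \<in> Opn" and v: "v \<in> Opn" and vu: "leO v u" and y: "y \<in> F v" and y': "y' \<in> F v"
    and yy: "le v y y'"
  shows "le u (lad v u y) (lad v u y')"
proof -
  have "le u (lad v u y) (lad v u y') \<longleftrightarrow> le v y (res u v (lad v u y'))"
    using lad_adj(2)[OF u v vu y lad_adj(1)[OF u v vu y']] .
  then show ?thesis unfolding res_lad[OF u v vu y'] using yy by blast
qed

lemma top_in: "u \<in> Opn \<Longrightarrow> top_of (F u) (le u) \<in> F u" using top_props(1)[OF cF] .
lemma le_top: "u \<in> Opn \<Longrightarrow> x \<in> F u \<Longrightarrow> le u x (top_of (F u) (le u))" using top_props(2)[OF cF] .

lemma res_top: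
  assumes u: "u \<in> Opn" and v: "v \<in> Opn" and vu: "leO v u"
  shows "res u v (top_of (F u) (le u)) = top_of (F v) (le v)"
proof -
  obtain z where z: "z \<in> F u" and e: "top_of (F v) (le v) = res u v z" using surj[OF u v vu] top_in[OF v] by blast
  have r: "res u v (top_of (F u) (le u)) \<in> F v" using res_in[OF u v vu top_in[OF u]] .
  have 1: "le v (top_of (F v) (le v)) (res u v (top_of (F u) (le u)))"
    unfolding e using res_mono[OF u v vu z top_in[OF u] le_top[OF u z]] .
  show ?thesis using fantisym[OF v r top_in[OF v] le_top[OF v r] 1] .
qed

lemma res_meet:
  assumes u: "u \<in> Opn" and v: "v \<in> Opn" and vu: "leO v u" and x: "x \<in> F u" and y: "y \<in> F u"
  shows "res u v (meet (F u) (le u) x y) = meet (F v) (le v) (res u v x) (res u v y)"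
proof -
  note m = meet_props[OF cF[OF u] x y]
  show ?thesis
  proof (rule meet_eqI[OF pos[OF v], symmetric])
    show "res u v (meet (F u) (le u) x y) \<in> F v" using res_in[OF u v vu m(1)] .
    show "le v (res u v (meet (F u) (le u) x y)) (res u v x)" using res_mono[OF u v vu m(1) x m(2)] .
    show "le v (res u v (meet (F u) (le u) x y)) (res u v y)" using res_mono[OF u v vu m(1) y m(3)] .
    fix w assume w: "w \<in> F v" "le v w (res u v x)" "le v w (res u v y)"
    note a = lad_adj[OF u v vu w(1)]
    have "le u (lad v u w) x" "le u (lad v u w) y" using a(2)[OF x] a(2)[OF y] w by blast+
    then have "le u (lad v u w) (meet (F u) (le u) x y)" using m(4)[OF a(1)] by blast
    then show "le v w (res u v (meet (F u) (le u) x y))" using a(2)[OF m(1)] by blast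
  qed
qed

lemma res_lub:
  assumes u: "u \<in> Opn" and v: "v \<in> Opn" and vu: "leO v u" and S: "S \<subseteq> F u"
  shows "res u v (lub (F u) (le u) S) = lub (F v) (le v) (res u v ` S)"
proof -
  obtain r where r: "is_right_adjoint F le res v u r" using radj_ex[OF u v vu] by blast
  have r_in: "\<And>y. y \<in> F v \<Longrightarrow> r y \<in> F u" using r unfolding is_right_adjoint_def by blast
  have r_iff: "\<And>x y. x \<in> F u \<Longrightarrow> y \<in> F v \<Longrightarrow> le v (res u v x) y \<longleftrightarrow> le u x (r y)"
    using r unfolding is_right_adjoint_def by blast
  have l: "lub (F u) (le u) S \<in> F u" using cl_lub_in[OF cF[OF u] S] .
  show ?thesis
  proof (rule lub_eqI[OF pos[OF v], symmetric])
    show "res u v (lub (F u) (le u) S) \<in> F v" using res_in[OF u v vu l] .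
    fix t assume "t \<in> res u v ` S"
    then obtain s where s: "s \<in> S" and t: "t = res u v s" by blast
    show "le v t (res u v (lub (F u) (le u) S))"
      unfolding t using res_mono[OF u v vu _ l cl_lub_upper[OF cF[OF u] S s]] s S by blast
  next
    fix y assume y: "y \<in> F v" and ub: "\<And>t. t \<in> res u v ` S \<Longrightarrow> le v t y"
    have "le u (lub (F u) (le u) S) (r y)"
    proof (rule cl_lub_least[OF cF[OF u] S r_in[OF y]])
      fix s assume s: "s \<in> S"
      show "le u s (r y)" using r_iff[of s y] s S y ub[of "res u v s"] by blast
    qed
    then show "le v (res u v (lub (F u) (le u) S)) y" using r_iff[OF l y] by blast
  qed
qed

lemma lad_lub:
  assumes u: "u \<in> Opn" and v: "v \<in> Opn" and vu: "leO v u" and S: "S \<subseteq> F v"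
  shows "lad v u (lub (F v) (le v) S) = lub (F u) (le u) (lad v u ` S)"
proof -
  have l: "lub (F v) (le v) S \<in> F v" using cl_lub_in[OF cF[OF v] S] .
  note a = lad_adj[OF u v vu l]
  show ?thesis
  proof (rule lub_eqI[OF pos[OF u], symmetric])
    show "lad v u (lub (F v) (le v) S) \<in> F u" by (rule a(1))
    fix t assume "t \<in> lad v u ` S"
    then obtain s where s: "s \<in> S" and t: "t = lad v u s" by blast
    show "le u t (lad v u (lub (F v) (le v) S))"
      unfolding t using lad_mono[OF u v vu _ l cl_lub_upper[OF cF[OF v] S s]] s S by blast
  next
    fix y assume y: "y \<in> F u" and ub: "\<And>t. t \<in> lad v u ` S \<Longrightarrow> le u t y"
    have "le v (lub (F v) (le v) S) (res u v y)"
    proof (rule cl_lub_least[OF cF[OF v] S res_in[OF u v vu y]])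
      fix s assume s: "s \<in> S"
      have sv: "s \<in> F v" using s S by blast
      show "le v s (res u v y)" using lad_adj(2)[OF u v vu sv y] ub[of "lad v u s"] s by blast
    qed
    then show "le u (lad v u (lub (F v) (le v) S)) y" using a(2)[OF y] by blast
  qed
qed

lemma lad_comp:
  assumes u: "u \<in> Opn" and v: "v \<in> Opn" and w: "w \<in> Opn" and wv: "leO w v" and vu: "leO v u"
    and y: "y \<in> F w"
  shows "lad v u (lad w v y) = lad w u y"
proof -
  have wu: "leO w u" using poset_trans[OF cl_poset[OF cX] w v u wv vu] .
  have y1: "lad w v y \<in> F v" using lad_adj(1)[OF v w wv y] .
  show ?thesis
  proof (rule lad_char[OF u lad_adj(1)[OF u v vu y1] y, symmetric])
    fix z assume z: "z \<in> F u"
    have "le u (lad v u (lad w v y)) z \<longleftrightarrow> le v (lad w v y) (res u v z)"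
      using lad_adj(2)[OF u v vu y1 z] .
    also have "\<dots> \<longleftrightarrow> le w y (res v w (res u v z))" using lad_adj(2)[OF v w wv y res_in[OF u v vu z]] .
    also have "res v w (res u v z) = res u w z" using res_comp[OF u v w wv vu z] .
    finally show "le u (lad v u (lad w v y)) z \<longleftrightarrow> le w y (res u w z)" .
  qed
qed

lemma lad_id:
  assumes u: "u \<in> Opn" and y: "y \<in> F u"
  shows "lad u u y = y"
  by (rule lad_char[OF u y y]) (simp add: res_id[OF u])

abbreviation "psi \<equiv> psi_hom Opn leO F le res"

lemma psi_def: "psi u = lad u T (top_of (F u) (le u))"
  unfolding psi_hom_def ..

lemma psi_in: "u \<in> Opn \<Longrightarrow> psi u \<in> F T"
  unfolding psi_def using lad_adj(1)[OF T_in _ le_T[of u] top_in[of u]] by blast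

lemma psi_le_iff: "u \<in> Opn \<Longrightarrow> x \<in> F T \<Longrightarrow> le T (psi u) x \<longleftrightarrow> le u (top_of (F u) (le u)) (res T u x)"
  unfolding psi_def using lad_adj(2)[OF T_in _ le_T[of u] top_in[of u]] by blast

lemma psi_mono:
  assumes u: "u \<in> Opn" and v: "v \<in> Opn" and vu: "leO v u"
  shows "le T (psi v) (psi u)"
proof -
  have e: "psi v = lad u T (lad v u (top_of (F v) (le v)))"
    unfolding psi_def using lad_comp[OF T_in u v vu le_T[OF u] top_in[OF v]] by simp
  have i: "lad v u (top_of (F v) (le v)) \<in> F u" using lad_adj(1)[OF u v vu top_in[OF v]] .
  show ?thesis unfolding e unfolding psi_def
    using lad_mono[OF T_in u le_T[OF u] i top_in[OF u] le_top[OF u i]] .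
qed

lemma psi_top: "psi T = top_of (F T) (le T)"
  unfolding psi_def using lad_id[OF T_in top_in[OF T_in]] .

lemma down_lad:
  assumes u: "u \<in> Opn" and x: "x \<in> F T" and xl: "le T x (psi u)"
  shows "lad u T (res T u x) = x"
proof -
  have r: "res T u x \<in> F u" using res_in[OF T_in u le_T[OF u] x] .
  have "meet (F T) (le T) x (psi u) = lad u T (meet (F u) (le u) (res T u x) (top_of (F u) (le u)))"
    unfolding psi_def using frob[OF T_in u le_T[OF u] x top_in[OF u]] .
  also have "meet (F u) (le u) (res T u x) (top_of (F u) (le u)) = res T u x" using meet_top[OF cF[OF u] r] .
  finally show ?thesis using meet_absorb[OF cF[OF T_in] x psi_in[OF u] xl] by simp
qed

end

context fs_ctx begin

lemma psi_lub:
  assumes S: "S \<subseteq> Opn"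
  shows "psi (lub Opn leO S) = lub (F T) (le T) (psi ` S)"
proof -
  define t where "t = lub Opn leO S"
  have t: "t \<in> Opn" unfolding t_def using cl_lub_in[OF cX S] .
  have "lub (F T) (le T) (psi ` S) = psi t"
  proof (rule lub_eqI[OF pos[OF T_in] psi_in[OF t]])
    fix s' assume "s' \<in> psi ` S"
    then obtain z where z: "z \<in> S" and e: "s' = psi z" by blast
    have zO: "z \<in> Opn" using z S by blast
    show "le T s' (psi t)" unfolding e t_def using psi_mono[OF t[unfolded t_def] zO cl_lub_upper[OF cX S z]] .
  next
    fix y assume y: "y \<in> F T" and ub: "\<And>s'. s' \<in> psi ` S \<Longrightarrow> le T s' y"
    have ry: "res T t y \<in> F t" using res_in[OF T_in t le_T[OF t] y] .
    have "le t (top_of (F t) (le t)) (res T t y)"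
    proof (rule pos3[OF t S t_def[symmetric] top_in[OF t] ry])
      fix w assume w: "w \<in> S"
      have wO: "w \<in> Opn" using w S by blast
      have wt: "leO w t" unfolding t_def using cl_lub_upper[OF cX S w] .
      have 1: "res t w (top_of (F t) (le t)) = top_of (F w) (le w)" using res_top[OF t wO wt] .
      have 2: "res t w (res T t y) = res T w y" using res_comp[OF T_in t wO wt le_T[OF t] y] .
      have "psi w \<in> psi ` S" using w by blast
      then have "le T (psi w) y" using ub by blast
      then have "le w (top_of (F w) (le w)) (res T w y)" using psi_le_iff[OF wO y] by blast
      then show "le w (res t w (top_of (F t) (le t))) (res t w (res T t y))" unfolding 1 2 .
    qed
    then show "le T (psi t) y" using psi_le_iff[OF t y] by blast
  qed
  then show ?thesis unfolding t_def by (rule sym)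
qed

lemma psi_meet:
  assumes u: "u \<in> Opn" and v: "v \<in> Opn"
  shows "psi (meet Opn leO u v) = meet (F T) (le T) (psi u) (psi v)"
proof (cases "u = v")
  case True
  have "meet Opn leO u u = u" using meet_absorb[OF cX u u poset_refl[OF cl_poset[OF cX] u]] .
  moreover have "meet (F T) (le T) (psi u) (psi u) = psi u"
    using meet_absorb[OF cF[OF T_in], OF psi_in[OF u] psi_in[OF u] frefl[OF T_in psi_in[OF u]]] .
  ultimately show ?thesis unfolding True by simp
next
  case False
  define w where "w = meet Opn leO u v"
  have w: "w \<in> Opn" and wu: "leO w u" and wv: "leO w v"
    unfolding w_def using meet_props(1,2,3)[OF cX u v] by blast+
  have wT: "le T (psi w) (psi u)" "le T (psi w) (psi v)"
    using psi_mono[OF u w wu] psi_mono[OF v w wv] .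
  define t where "t = lub Opn leO {u, v}"
  have uvO: "{u, v} \<subseteq> Opn" using u v by blast
  have t: "t \<in> Opn" unfolding t_def using cl_lub_in[OF cX uvO] .
  have ut: "leO u t" and vt: "leO v t" unfolding t_def using cl_lub_upper[OF cX uvO] by blast+
  define s where "s = (\<lambda>z. if z = u then top_of (F u) (le u) else lad w v (top_of (F w) (le w)))"
  have su: "s u = top_of (F u) (le u)" unfolding s_def by simp
  have sv: "s v = lad w v (top_of (F w) (le w))" unfolding s_def using False by simp
  have lwv: "lad w v (top_of (F w) (le w)) \<in> F v" using lad_adj(1)[OF v w wv top_in[OF w]] .
  have s_in: "\<forall>z\<in>{u,v}. s z \<in> F z"
  proof
    fix z assume "z \<in> {u,v}" then have "z = u \<or> z = v" by blast
    then show "s z \<in> F z"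
    proof
      assume "z = u" then show ?thesis using su top_in[OF u] by simp
    next
      assume "z = v" then show ?thesis using sv lwv by simp
    qed
  qed
  have c1: "res u w (s u) = res v w (s v)"
    unfolding su sv res_top[OF u w wu] res_lad[OF v w wv top_in[OF w]] ..
  have mvu: "meet Opn leO v u = w" unfolding w_def by (rule meet_comm)
  have mu: "meet Opn leO u v = w" unfolding w_def ..
  have comp: "\<forall>z\<in>{u,v}. \<forall>z'\<in>{u,v}. res z (meet Opn leO z z') (s z) = res z' (meet Opn leO z z') (s z')"
  proof (intro ballI)
    fix z z' assume z: "z \<in> {u,v}" and z': "z' \<in> {u,v}"
    show "res z (meet Opn leO z z') (s z) = res z' (meet Opn leO z z') (s z')"
    proof (cases "z = z'")
      case True then show ?thesis by (simp only:)
    next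
      case ne: False
      then have "(z = u \<and> z' = v) \<or> (z = v \<and> z' = u)" using z z' by blast
      then show ?thesis
      proof
        assume h: "z = u \<and> z' = v"
        have hz: "z = u" and hz': "z' = v" using h by blast+
        show ?thesis unfolding hz hz' mu using c1 .
      next
        assume h: "z = v \<and> z' = u"
        have hz: "z = v" and hz': "z' = u" using h by blast+
        show ?thesis unfolding hz hz' mvu using c1[symmetric] .
      qed
    qed
  qed
  obtain g where g: "g \<in> F t" and gr: "\<forall>z\<in>{u,v}. res t z g = s z"
    using glue[OF t uvO t_def[symmetric] s_in comp] by blast
  have gu: "res t u g = top_of (F u) (le u)" using bspec[OF gr, of u] su by simp
  have gv: "res t v g = lad w v (top_of (F w) (le w))" using bspec[OF gr, of v] sv by simp
  have lg: "lad t T g \<in> F T" using lad_adj(1)[OF T_in t le_T[OF t] g] .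
  have lut: "lad u t (top_of (F u) (le u)) \<in> F t" using lad_adj(1)[OF t u ut top_in[OF u]] .
  have "le t (lad u t (top_of (F u) (le u))) g"
    using lad_adj(2)[OF t u ut top_in[OF u] g] frefl[OF u top_in[OF u]] unfolding gu by blast
  then have "le T (lad t T (lad u t (top_of (F u) (le u)))) (lad t T g)"
    using lad_mono[OF T_in t le_T[OF t] lut g] by blast
  then have pu: "le T (psi u) (lad t T g)"
    unfolding psi_def lad_comp[OF T_in t u ut le_T[OF t] top_in[OF u]] .
  have 1: "le T (meet (F T) (le T) (psi u) (psi v)) (meet (F T) (le T) (lad t T g) (psi v))"
    using meet_mono[OF cF[OF T_in], OF psi_in[OF u] lg psi_in[OF v] pu] .
  have rlg: "res T v (lad t T g) = lad w v (top_of (F w) (le w))"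
    using res_comp[OF T_in t v vt le_T[OF t] lad_adj(1)[OF T_in t le_T[OF t] g], symmetric]
    unfolding res_lad[OF T_in t le_T[OF t] g] gv .
  have "meet (F T) (le T) (lad t T g) (psi v)
        = lad v T (meet (F v) (le v) (res T v (lad t T g)) (top_of (F v) (le v)))"
    unfolding psi_def using frob[OF T_in v le_T[OF v] lg top_in[OF v]] .
  also have "\<dots> = lad v T (lad w v (top_of (F w) (le w)))"
    unfolding rlg meet_top[OF cF[OF v] lwv] ..
  also have "\<dots> = psi w" unfolding psi_def using lad_comp[OF T_in v w wv le_T[OF v] top_in[OF w]] .
  finally have 2: "meet (F T) (le T) (lad t T g) (psi v) = psi w" .
  have mi: "meet (F T) (le T) (psi u) (psi v) \<in> F T" using meet_props(1)[OF cF[OF T_in] psi_in[OF u] psi_in[OF v]] .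
  have a: "le T (meet (F T) (le T) (psi u) (psi v)) (psi w)" using 1 unfolding 2 .
  have b: "le T (psi w) (meet (F T) (le T) (psi u) (psi v))"
    using meet_props(4)[OF cF[OF T_in], OF psi_in[OF u] psi_in[OF v] psi_in[OF w] wT] .
  show ?thesis unfolding w_def[symmetric] using fantisym[OF T_in psi_in[OF w] mi b a] .
qed

lemma psi_frame_hom: "frame_hom Opn leO (F T) (le T) psi"
  unfolding frame_hom_def
proof (intro conjI ballI allI impI)
  show "\<And>x. x \<in> Opn \<Longrightarrow> psi x \<in> F T" by (rule psi_in)
  show "psi T = top_of (F T) (le T)" by (rule psi_top)
  show "\<And>x y. x \<in> Opn \<Longrightarrow> y \<in> Opn \<Longrightarrow> psi (meet Opn leO x y) = meet (F T) (le T) (psi x) (psi y)"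
    by (rule psi_meet)
  show "\<And>S. S \<subseteq> Opn \<Longrightarrow> psi (lub Opn leO S) = lub (F T) (le T) (psi ` S)" by (rule psi_lub)
qed

lemma Q: "phi_ctx Opn leO (F T) (le T) psi"
  unfolding phi_ctx_def using X frm[OF T_in] psi_frame_hom by (intro conjI)

end

context fs_ctx begin

abbreviation "D \<equiv> phi_F (F T) (le T) psi"
abbreviation "RD \<equiv> phi_res (F T) (le T) psi"

lemma D_def: "D u = {x \<in> F T. le T x (psi u)}" unfolding phi_F_def ..
lemma D_in: "x \<in> D u \<Longrightarrow> x \<in> F T" unfolding D_def by blast
lemma D_le: "x \<in> D u \<Longrightarrow> le T x (psi u)" unfolding D_def by blast
lemma RD_def: "RD u v x = meet (F T) (le T) x (psi v)" unfolding phi_res_def ..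

lemma ladjD: "u \<in> Opn \<Longrightarrow> v \<in> Opn \<Longrightarrow> leO v u \<Longrightarrow> y \<in> D v \<Longrightarrow> ladj D (phi_le (le T)) RD v u y = y"
  using phi_ctx.ladjP[OF Q] .

lemma topD: "u \<in> Opn \<Longrightarrow> top_of (D u) (le T) = psi u"
  unfolding D_def using down_top[OF cF[OF T_in], OF psi_in] .

lemma meetD: "u \<in> Opn \<Longrightarrow> x \<in> D u \<Longrightarrow> y \<in> D u \<Longrightarrow> meet (D u) (le T) x y = meet (F T) (le T) x y"
  unfolding D_def using down_meet[OF cF[OF T_in], OF psi_in] .

lemma lubD: "u \<in> Opn \<Longrightarrow> S \<subseteq> D u \<Longrightarrow> lub (D u) (le T) S = lub (F T) (le T) S"
  unfolding D_def using down_lub[OF cF[OF T_in], OF psi_in] .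

lemma res_psi: "u \<in> Opn \<Longrightarrow> res T u (psi u) = top_of (F u) (le u)"
  unfolding psi_def using res_lad[OF T_in _ le_T top_in] .

lemma eps_mor: "frame_morphism Opn leO D (phi_le (le T)) RD F le res (\<lambda>u x. res T u x)"
proof -
  have c1: "\<forall>u\<in>Opn. \<forall>x\<in>D u. res T u x \<in> F u"
    using res_in[OF T_in _ le_T D_in] by blast
  have c2: "\<forall>u\<in>Opn. \<forall>v\<in>Opn. leO v u \<longrightarrow> (\<forall>x\<in>D u. res u v (res T u x) = res T v (RD u v x))"
  proof (intro ballI impI)
    fix u v x assume u: "u \<in> Opn" and v: "v \<in> Opn" and vu: "leO v u" and x: "x \<in> D u"
    have xT: "x \<in> F T" using D_in[OF x] .
    have rx: "res T v x \<in> F v" using res_in[OF T_in v le_T[OF v] xT] .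
    have "res T v (RD u v x) = meet (F v) (le v) (res T v x) (res T v (psi v))"
      unfolding RD_def using res_meet[OF T_in v le_T[OF v] xT psi_in[OF v]] .
    also have "\<dots> = res T v x" unfolding res_psi[OF v] using meet_top[OF cF[OF v], OF rx] .
    finally show "res u v (res T u x) = res T v (RD u v x)"
      using res_comp[OF T_in u v vu le_T[OF u] xT] by simp
  qed
  have c3: "\<forall>u\<in>Opn. frame_hom (D u) (phi_le (le T) u) (F u) (le u) (\<lambda>x. res T u x)"
  proof
    fix u assume u: "u \<in> Opn"
    show "frame_hom (D u) (phi_le (le T) u) (F u) (le u) (\<lambda>x. res T u x)"
      unfolding frame_hom_def phi_le_def
    proof (intro conjI ballI allI impI)
      show "\<And>x. x \<in> D u \<Longrightarrow> res T u x \<in> F u" using c1 u by blast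
      show "res T u (top_of (D u) (le T)) = top_of (F u) (le u)"
        unfolding topD[OF u] res_psi[OF u] ..
      fix x y assume x: "x \<in> D u" and y: "y \<in> D u"
      show "res T u (meet (D u) (le T) x y) = meet (F u) (le u) (res T u x) (res T u y)"
        unfolding meetD[OF u x y] using res_meet[OF T_in u le_T[OF u] D_in[OF x] D_in[OF y]] .
    next
      fix S assume S: "S \<subseteq> D u"
      have ST: "S \<subseteq> F T" using S D_in by blast
      show "res T u (lub (D u) (le T) S) = lub (F u) (le u) ((\<lambda>x. res T u x) ` S)"
        unfolding lubD[OF u S] using res_lub[OF T_in u le_T[OF u] ST] .
    qed
  qed
  have c4: "\<forall>u\<in>Opn. \<forall>v\<in>Opn. leO v u \<longrightarrow>
        (\<forall>y\<in>D v. res T u (ladj D (phi_le (le T)) RD v u y) = lad v u (res T v y))"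
  proof (intro ballI impI)
    fix u v y assume u: "u \<in> Opn" and v: "v \<in> Opn" and vu: "leO v u" and y: "y \<in> D v"
    have yT: "y \<in> F T" using D_in[OF y] .
    define z where "z = res T v y"
    have z: "z \<in> F v" unfolding z_def using res_in[OF T_in v le_T[OF v] yT] .
    have "y = lad v T z" unfolding z_def using down_lad[OF v yT D_le[OF y]] by simp
    also have "\<dots> = lad u T (lad v u z)" using lad_comp[OF T_in u v vu le_T[OF u] z] by simp
    finally have ey: "y = lad u T (lad v u z)" .
    have "res T u y = lad v u z" unfolding ey using res_lad[OF T_in u le_T[OF u] lad_adj(1)[OF u v vu z]] .
    then show "res T u (ladj D (phi_le (le T)) RD v u y) = lad v u (res T v y)"
      unfolding ladjD[OF u v vu y] z_def .
  qed
  show ?thesis unfolding frame_morphism_def using c1 c2 c3 c4 by (intro conjI) assumption+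
qed

lemma lad_D: "u \<in> Opn \<Longrightarrow> y \<in> F u \<Longrightarrow> lad u T y \<in> D u"
proof -
  assume u: "u \<in> Opn" and y: "y \<in> F u"
  have "le T (lad u T y) (psi u)"
    unfolding psi_def using lad_mono[OF T_in u le_T[OF u] y top_in[OF u] le_top[OF u y]] .
  then show ?thesis unfolding D_def using lad_adj(1)[OF T_in u le_T[OF u] y] by blast
qed

lemma beta_mor: "frame_morphism Opn leO F le res D (phi_le (le T)) RD (\<lambda>u y. lad u T y)"
proof -
  have b1: "\<forall>u\<in>Opn. \<forall>y\<in>F u. lad u T y \<in> D u" using lad_D by blast
  have b2: "\<forall>u\<in>Opn. \<forall>v\<in>Opn. leO v u \<longrightarrow> (\<forall>x\<in>F u. RD u v (lad u T x) = lad v T (res u v x))"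
  proof (intro ballI impI)
    fix u v x assume u: "u \<in> Opn" and v: "v \<in> Opn" and vu: "leO v u" and x: "x \<in> F u"
    have lx: "lad u T x \<in> F T" using lad_adj(1)[OF T_in u le_T[OF u] x] .
    have r: "res T v (lad u T x) = res u v x"
      using res_comp[OF T_in u v vu le_T[OF u] lx, symmetric] unfolding res_lad[OF T_in u le_T[OF u] x] .
    have rv: "res u v x \<in> F v" using res_in[OF u v vu x] .
    have "RD u v (lad u T x) = lad v T (meet (F v) (le v) (res T v (lad u T x)) (top_of (F v) (le v)))"
      unfolding RD_def psi_def using frob[OF T_in v le_T[OF v] lx top_in[OF v]] .
    also have "\<dots> = lad v T (res u v x)" unfolding r meet_top[OF cF[OF v], OF rv] ..
    finally show "RD u v (lad u T x) = lad v T (res u v x)" .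
  qed
  have b3: "\<forall>u\<in>Opn. frame_hom (F u) (le u) (D u) (phi_le (le T) u) (\<lambda>y. lad u T y)"
  proof
    fix u assume u: "u \<in> Opn"
    show "frame_hom (F u) (le u) (D u) (phi_le (le T) u) (\<lambda>y. lad u T y)"
      unfolding frame_hom_def phi_le_def
    proof (intro conjI ballI allI impI)
      show "\<And>x. x \<in> F u \<Longrightarrow> lad u T x \<in> D u" using lad_D[OF u] .
      show "lad u T (top_of (F u) (le u)) = top_of (D u) (le T)"
        unfolding topD[OF u] psi_def ..
      fix x y assume x: "x \<in> F u" and y: "y \<in> F u"
      have lx: "lad u T x \<in> F T" using lad_adj(1)[OF T_in u le_T[OF u] x] .
      have "meet (D u) (le T) (lad u T x) (lad u T y) = meet (F T) (le T) (lad u T x) (lad u T y)"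
        using meetD[OF u lad_D[OF u x] lad_D[OF u y]] .
      also have "\<dots> = lad u T (meet (F u) (le u) (res T u (lad u T x)) y)"
        using frob[OF T_in u le_T[OF u] lx y] .
      also have "\<dots> = lad u T (meet (F u) (le u) x y)" unfolding res_lad[OF T_in u le_T[OF u] x] ..
      finally show "lad u T (meet (F u) (le u) x y) = meet (D u) (le T) (lad u T x) (lad u T y)" by simp
    next
      fix S assume S: "S \<subseteq> F u"
      have SD: "(\<lambda>y. lad u T y) ` S \<subseteq> D u" using lad_D[OF u] S by blast
      show "lad u T (lub (F u) (le u) S) = lub (D u) (le T) ((\<lambda>y. lad u T y) ` S)"
        unfolding lubD[OF u SD] using lad_lub[OF T_in u le_T[OF u] S] .
    qed
  qed
  have b4: "\<forall>u\<in>Opn. \<forall>v\<in>Opn. leO v u \<longrightarrow>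
        (\<forall>y\<in>F v. lad u T (lad v u y) = ladj D (phi_le (le T)) RD v u (lad v T y))"
  proof (intro ballI impI)
    fix u v y assume u: "u \<in> Opn" and v: "v \<in> Opn" and vu: "leO v u" and y: "y \<in> F v"
    show "lad u T (lad v u y) = ladj D (phi_le (le T)) RD v u (lad v T y)"
      unfolding ladjD[OF u v vu lad_D[OF v y]] using lad_comp[OF T_in u v vu le_T[OF u] y] .
  qed
  show ?thesis unfolding frame_morphism_def using b1 b2 b3 b4 by (intro conjI) assumption+
qed

lemma inv1: "\<forall>u\<in>Opn. \<forall>x\<in>D u. lad u T (res T u x) = x"
  using down_lad D_in D_le by blast

lemma inv2: "\<forall>u\<in>Opn. \<forall>y\<in>F u. res T u (lad u T y) = y"
  using res_lad[OF T_in _ le_T] by blast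

end

lemma fm_parts:
  assumes "frame_morphism Opn leO F le res G le' res' \<alpha>"
  shows "\<forall>u\<in>Opn. \<forall>v\<in>Opn. leO v u \<longrightarrow> (\<forall>x\<in>F u. res' u v (\<alpha> u x) = \<alpha> v (res u v x))"
    "\<forall>u\<in>Opn. frame_hom (F u) (le u) (G u) (le' u) (\<alpha> u)"
    "\<forall>u\<in>Opn. \<forall>v\<in>Opn. leO v u \<longrightarrow>
        (\<forall>y\<in>F v. \<alpha> u (ladj F le res v u y) = ladj G le' res' v u (\<alpha> v y))"
proof -
  note a = assms[unfolded frame_morphism_def]
  show "\<forall>u\<in>Opn. \<forall>v\<in>Opn. leO v u \<longrightarrow> (\<forall>x\<in>F u. res' u v (\<alpha> u x) = \<alpha> v (res u v x))"
    using a by (elim conjE)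
  show "\<forall>u\<in>Opn. frame_hom (F u) (le u) (G u) (le' u) (\<alpha> u)"
    using a by (elim conjE)
  show "\<forall>u\<in>Opn. \<forall>v\<in>Opn. leO v u \<longrightarrow>
        (\<forall>y\<in>F v. \<alpha> u (ladj F le res v u y) = ladj G le' res' v u (\<alpha> v y))"
    using a by (elim conjE)
qed

lemma psi_mor:
  assumes FF: "fs_ctx Opn leO F le res" and GG: "fs_ctx Opn leO G le' res'"
    and a: "frame_morphism Opn leO F le res G le' res' \<alpha>"
  shows "coslice_mor Opn leO (F (top_of Opn leO)) (le (top_of Opn leO)) (psi_hom Opn leO F le res)
                          (G (top_of Opn leO)) (le' (top_of Opn leO)) (psi_hom Opn leO G le' res')
                          (\<alpha> (top_of Opn leO))"
proof -
  interpret A: fs_ctx Opn leO F le res by (rule FF)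
  interpret B: fs_ctx Opn leO G le' res' by (rule GG)
  note p = fm_parts[OF a]
  have h: "frame_hom (F A.T) (le A.T) (G A.T) (le' A.T) (\<alpha> A.T)" using bspec[OF p(2) A.T_in] .
  have "\<alpha> A.T (A.psi u) = B.psi u" if u: "u \<in> Opn" for u
  proof -
    have hu: "frame_hom (F u) (le u) (G u) (le' u) (\<alpha> u)" using bspec[OF p(2) u] .
    have t: "\<alpha> u (top_of (F u) (le u)) = top_of (G u) (le' u)" using hu unfolding frame_hom_def by blast
    have "\<alpha> A.T (ladj F le res u A.T (top_of (F u) (le u))) = ladj G le' res' u A.T (\<alpha> u (top_of (F u) (le u)))"
      using bspec[OF mp[OF bspec[OF bspec[OF p(3) A.T_in] u] A.le_T[OF u]] A.top_in[OF u]] .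
    then show ?thesis unfolding A.psi_def B.psi_def t .
  qed
  then show ?thesis unfolding coslice_mor_def using h by blast
qed

lemma main1:
  assumes X: "frame_on Opn leO"
  shows "\<forall>(L :: 'a set) leL f. coslice_obj Opn leO L leL f \<longrightarrow>
        frame_sheaf_on Opn leO (phi_F L leL f) (phi_le leL) (phi_res L leL f)"
proof (intro allI impI)
  fix L :: "'a set" and leL f assume c: "coslice_obj Opn leO L leL f"
  have "phi_ctx Opn leO L leL f" using X c unfolding coslice_obj_def phi_ctx_def by blast
  then show "frame_sheaf_on Opn leO (phi_F L leL f) (phi_le leL) (phi_res L leL f)"
    by (rule phi_ctx.phi_frame_sheaf)
qed

lemma main2:
  assumes X: "frame_on Opn leO"
  shows "\<forall>(L :: 'a set) leL f (M :: 'a set) leM g h.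
        coslice_obj Opn leO L leL f \<and> coslice_obj Opn leO M leM g \<and>
        coslice_mor Opn leO L leL f M leM g h \<longrightarrow>
        frame_morphism Opn leO (phi_F L leL f) (phi_le leL) (phi_res L leL f)
                             (phi_F M leM g) (phi_le leM) (phi_res M leM g) (phi_mor h)"
proof (intro allI impI)
  fix L :: "'a set" and leL f and M :: "'a set" and leM g h
  assume c: "coslice_obj Opn leO L leL f \<and> coslice_obj Opn leO M leM g \<and> coslice_mor Opn leO L leL f M leM g h"
  have A: "phi_ctx Opn leO L leL f" using X c unfolding coslice_obj_def phi_ctx_def by blast
  have B: "phi_ctx Opn leO M leM g" using X c unfolding coslice_obj_def phi_ctx_def by blast
  show "frame_morphism Opn leO (phi_F L leL f) (phi_le leL) (phi_res L leL f)
                             (phi_F M leM g) (phi_le leM) (phi_res M leM g) (phi_mor h)"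
    using phi_mor_ok[OF A B] c by blast
qed

lemma fsc: "frame_on Opn leO \<Longrightarrow> frame_sheaf_on Opn leO F le res \<Longrightarrow> fs_ctx Opn leO F le res"
  unfolding fs_ctx_def by (intro conjI)

lemma main3:
  assumes X: "frame_on Opn leO"
  shows "\<forall>(F :: 'o \<Rightarrow> 'a set) le res. frame_sheaf_on Opn leO F le res \<longrightarrow>
        coslice_obj Opn leO (F (top_of Opn leO)) (le (top_of Opn leO)) (psi_hom Opn leO F le res)"
proof (intro allI impI)
  fix F :: "'o \<Rightarrow> 'a set" and le res assume fs: "frame_sheaf_on Opn leO F le res"
  have fc: "fs_ctx Opn leO F le res" using fsc[OF X fs] .
  show "coslice_obj Opn leO (F (top_of Opn leO)) (le (top_of Opn leO)) (psi_hom Opn leO F le res)"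
    unfolding coslice_obj_def
    using fs_ctx.frm[OF fc fs_ctx.T_in[OF fc]] fs_ctx.psi_frame_hom[OF fc] by (intro conjI)
qed

lemma main4:
  assumes X: "frame_on Opn leO"
  shows "\<forall>(F :: 'o \<Rightarrow> 'a set) le res (G :: 'o \<Rightarrow> 'a set) le' res' \<alpha>.
        frame_sheaf_on Opn leO F le res \<and> frame_sheaf_on Opn leO G le' res' \<and>
        frame_morphism Opn leO F le res G le' res' \<alpha> \<longrightarrow>
        coslice_mor Opn leO (F (top_of Opn leO)) (le (top_of Opn leO)) (psi_hom Opn leO F le res)
                          (G (top_of Opn leO)) (le' (top_of Opn leO)) (psi_hom Opn leO G le' res')
                          (\<alpha> (top_of Opn leO))"
proof (intro allI impI)
  fix F :: "'o \<Rightarrow> 'a set" and le res and G :: "'o \<Rightarrow> 'a set" and le' res' \<alpha>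
  assume c: "frame_sheaf_on Opn leO F le res \<and> frame_sheaf_on Opn leO G le' res' \<and>
        frame_morphism Opn leO F le res G le' res' \<alpha>"
  have fc: "fs_ctx Opn leO F le res" using fsc[OF X] c by blast
  have gc: "fs_ctx Opn leO G le' res'" using fsc[OF X] c by blast
  have a: "frame_morphism Opn leO F le res G le' res' \<alpha>" using c by blast
  show "coslice_mor Opn leO (F (top_of Opn leO)) (le (top_of Opn leO)) (psi_hom Opn leO F le res)
                          (G (top_of Opn leO)) (le' (top_of Opn leO)) (psi_hom Opn leO G le' res')
                          (\<alpha> (top_of Opn leO))"
    using psi_mor[OF fc gc a] .
qed

lemma main5:
  assumes X: "frame_on Opn leO"
  shows "\<exists>\<eta> :: 'a set \<Rightarrow> ('a \<Rightarrow> 'a \<Rightarrow> bool) \<Rightarrow> ('o \<Rightarrow> 'a) \<Rightarrow> 'a \<Rightarrow> 'a.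
        (\<forall>L leL f. coslice_obj Opn leO L leL f \<longrightarrow>
           coslice_mor Opn leO L leL f
             (phi_F L leL f (top_of Opn leO)) (phi_le leL (top_of Opn leO))
             (psi_hom Opn leO (phi_F L leL f) (phi_le leL) (phi_res L leL f))
             (\<eta> L leL f) \<and>
           (\<exists>k. coslice_mor Opn leO
                  (phi_F L leL f (top_of Opn leO)) (phi_le leL (top_of Opn leO))
                  (psi_hom Opn leO (phi_F L leL f) (phi_le leL) (phi_res L leL f))
                  L leL f k \<and>
                (\<forall>x\<in>L. k (\<eta> L leL f x) = x) \<and>
                (\<forall>y\<in>phi_F L leL f (top_of Opn leO). \<eta> L leL f (k y) = y))) \<and>
        (\<forall>L leL f M leM g h.
           coslice_obj Opn leO L leL f \<and> coslice_obj Opn leO M leM g \<and>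
           coslice_mor Opn leO L leL f M leM g h \<longrightarrow>
           (\<forall>x\<in>L. \<eta> M leM g (h x) = phi_mor h (top_of Opn leO) (\<eta> L leL f x)))"
proof (rule exI[where x="\<lambda>L leL f x. x"], intro conjI allI impI ballI)
  fix L :: "'a set" and leL f assume c: "coslice_obj Opn leO L leL f"
  have pc: "phi_ctx Opn leO L leL f" using X c unfolding coslice_obj_def phi_ctx_def by blast
  show "coslice_mor Opn leO L leL f (phi_F L leL f (top_of Opn leO)) (phi_le leL (top_of Opn leO))
     (psi_hom Opn leO (phi_F L leL f) (phi_le leL) (phi_res L leL f)) (\<lambda>x. x)"
    using phi_ctx.eta1[OF pc] .
  show "\<exists>k. coslice_mor Opn leO (phi_F L leL f (top_of Opn leO)) (phi_le leL (top_of Opn leO))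
          (psi_hom Opn leO (phi_F L leL f) (phi_le leL) (phi_res L leL f)) L leL f k \<and>
         (\<forall>x\<in>L. k x = x) \<and> (\<forall>y\<in>phi_F L leL f (top_of Opn leO). k y = y)"
    by (rule exI[where x="\<lambda>x. x"]) (simp add: phi_ctx.eta2[OF pc])
next
  fix L :: "'a set" and leL f and M :: "'a set" and leM g h x
  show "h x = phi_mor h (top_of Opn leO) x" unfolding phi_mor_def ..
qed

lemma main6:
  assumes X: "frame_on Opn leO"
  shows "\<exists>\<epsilon> :: ('o \<Rightarrow> 'a set) \<Rightarrow> ('o \<Rightarrow> 'a \<Rightarrow> 'a \<Rightarrow> bool) \<Rightarrow> ('o \<Rightarrow> 'o \<Rightarrow> 'a \<Rightarrow> 'a) \<Rightarrow> 'o \<Rightarrow> 'a \<Rightarrow> 'a.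
        (\<forall>F le res. frame_sheaf_on Opn leO F le res \<longrightarrow>
           frame_morphism Opn leO
             (phi_F (F (top_of Opn leO)) (le (top_of Opn leO)) (psi_hom Opn leO F le res))
             (phi_le (le (top_of Opn leO)))
             (phi_res (F (top_of Opn leO)) (le (top_of Opn leO)) (psi_hom Opn leO F le res))
             F le res (\<epsilon> F le res) \<and>
           (\<exists>\<beta>. frame_morphism Opn leO F le res
                  (phi_F (F (top_of Opn leO)) (le (top_of Opn leO)) (psi_hom Opn leO F le res))
                  (phi_le (le (top_of Opn leO)))
                  (phi_res (F (top_of Opn leO)) (le (top_of Opn leO)) (psi_hom Opn leO F le res))
                  \<beta> \<and>
                (\<forall>u\<in>Opn. \<forall>x\<in>phi_F (F (top_of Opn leO)) (le (top_of Opn leO)) (psi_hom Opn leO F le res) u.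
                   \<beta> u (\<epsilon> F le res u x) = x) \<and>
                (\<forall>u\<in>Opn. \<forall>y\<in>F u. \<epsilon> F le res u (\<beta> u y) = y))) \<and>
        (\<forall>F le res G le' res' \<alpha>.
           frame_sheaf_on Opn leO F le res \<and> frame_sheaf_on Opn leO G le' res' \<and>
           frame_morphism Opn leO F le res G le' res' \<alpha> \<longrightarrow>
           (\<forall>u\<in>Opn. \<forall>x\<in>phi_F (F (top_of Opn leO)) (le (top_of Opn leO)) (psi_hom Opn leO F le res) u.
              \<epsilon> G le' res' u (phi_mor (\<alpha> (top_of Opn leO)) u x) = \<alpha> u (\<epsilon> F le res u x)))"
proof (rule exI[where x="\<lambda>F le res u x. res (top_of Opn leO) u x"], intro conjI allI impI)
  fix F :: "'o \<Rightarrow> 'a set" and le res assume fs: "frame_sheaf_on Opn leO F le res"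
  have fc: "fs_ctx Opn leO F le res" using fsc[OF X fs] .
  show "frame_morphism Opn leO
             (phi_F (F (top_of Opn leO)) (le (top_of Opn leO)) (psi_hom Opn leO F le res))
             (phi_le (le (top_of Opn leO)))
             (phi_res (F (top_of Opn leO)) (le (top_of Opn leO)) (psi_hom Opn leO F le res))
             F le res (\<lambda>u x. res (top_of Opn leO) u x)"
    using fs_ctx.eps_mor[OF fc] .
  show "\<exists>\<beta>. frame_morphism Opn leO F le res
                  (phi_F (F (top_of Opn leO)) (le (top_of Opn leO)) (psi_hom Opn leO F le res))
                  (phi_le (le (top_of Opn leO)))
                  (phi_res (F (top_of Opn leO)) (le (top_of Opn leO)) (psi_hom Opn leO F le res))
                  \<beta> \<and>
                (\<forall>u\<in>Opn. \<forall>x\<in>phi_F (F (top_of Opn leO)) (le (top_of Opn leO)) (psi_hom Opn leO F le res) u.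
                   \<beta> u (res (top_of Opn leO) u x) = x) \<and>
                (\<forall>u\<in>Opn. \<forall>y\<in>F u. res (top_of Opn leO) u (\<beta> u y) = y)"
  proof (rule exI[where x="\<lambda>u y. ladj F le res u (top_of Opn leO) y"], intro conjI)
    show "frame_morphism Opn leO F le res
                  (phi_F (F (top_of Opn leO)) (le (top_of Opn leO)) (psi_hom Opn leO F le res))
                  (phi_le (le (top_of Opn leO)))
                  (phi_res (F (top_of Opn leO)) (le (top_of Opn leO)) (psi_hom Opn leO F le res))
                  (\<lambda>u y. ladj F le res u (top_of Opn leO) y)"
      using fs_ctx.beta_mor[OF fc] .
    show "\<forall>u\<in>Opn. \<forall>x\<in>phi_F (F (top_of Opn leO)) (le (top_of Opn leO)) (psi_hom Opn leO F le res) u.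
                   ladj F le res u (top_of Opn leO) (res (top_of Opn leO) u x) = x"
      using fs_ctx.inv1[OF fc] .
    show "\<forall>u\<in>Opn. \<forall>y\<in>F u. res (top_of Opn leO) u (ladj F le res u (top_of Opn leO) y) = y"
      using fs_ctx.inv2[OF fc] .
  qed
next
  fix F :: "'o \<Rightarrow> 'a set" and le res and G :: "'o \<Rightarrow> 'a set" and le' res' \<alpha>
  assume c: "frame_sheaf_on Opn leO F le res \<and> frame_sheaf_on Opn leO G le' res' \<and>
           frame_morphism Opn leO F le res G le' res' \<alpha>"
  have fc: "fs_ctx Opn leO F le res" using fsc[OF X] c by blast
  have a: "frame_morphism Opn leO F le res G le' res' \<alpha>" using c by blast
  note p = fm_parts(1)[OF a]
  show "\<forall>u\<in>Opn. \<forall>x\<in>phi_F (F (top_of Opn leO)) (le (top_of Opn leO)) (psi_hom Opn leO F le res) u.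
              res' (top_of Opn leO) u (phi_mor (\<alpha> (top_of Opn leO)) u x) = \<alpha> u (res (top_of Opn leO) u x)"
  proof (intro ballI)
    fix u x assume u: "u \<in> Opn" and x: "x \<in> phi_F (F (top_of Opn leO)) (le (top_of Opn leO)) (psi_hom Opn leO F le res) u"
    have xT: "x \<in> F (top_of Opn leO)" using fs_ctx.D_in[OF fc x] .
    show "res' (top_of Opn leO) u (phi_mor (\<alpha> (top_of Opn leO)) u x) = \<alpha> u (res (top_of Opn leO) u x)"
      unfolding phi_mor_def
      using bspec[OF mp[OF bspec[OF bspec[OF p fs_ctx.T_in[OF fc]] u] fs_ctx.le_T[OF fc u]] xT] .
  qed
qed

theorem theorem3p1:
  fixes Opn :: "'o set" and leO :: "'o \<Rightarrow> 'o \<Rightarrow> bool"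
  assumes X: "frame_on Opn leO"
  shows
    \<comment> \<open>Phi is well defined on objects\<close>
    "(\<forall>(L :: 'a set) leL f. coslice_obj Opn leO L leL f \<longrightarrow>
        frame_sheaf_on Opn leO (phi_F L leL f) (phi_le leL) (phi_res L leL f)) \<and>
    \<comment> \<open>Phi is well defined on morphisms\<close>
     (\<forall>(L :: 'a set) leL f (M :: 'a set) leM g h.
        coslice_obj Opn leO L leL f \<and> coslice_obj Opn leO M leM g \<and>
        coslice_mor Opn leO L leL f M leM g h \<longrightarrow>
        frame_morphism Opn leO (phi_F L leL f) (phi_le leL) (phi_res L leL f)
                             (phi_F M leM g) (phi_le leM) (phi_res M leM g) (phi_mor h)) \<and>
    \<comment> \<open>Psi is well defined on objects\<close>
     (\<forall>(F :: 'o \<Rightarrow> 'a set) le res. frame_sheaf_on Opn leO F le res \<longrightarrow>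
        coslice_obj Opn leO (F (top_of Opn leO)) (le (top_of Opn leO)) (psi_hom Opn leO F le res)) \<and>
    \<comment> \<open>Psi is well defined on morphisms\<close>
     (\<forall>(F :: 'o \<Rightarrow> 'a set) le res (G :: 'o \<Rightarrow> 'a set) le' res' \<alpha>.
        frame_sheaf_on Opn leO F le res \<and> frame_sheaf_on Opn leO G le' res' \<and>
        frame_morphism Opn leO F le res G le' res' \<alpha> \<longrightarrow>
        coslice_mor Opn leO (F (top_of Opn leO)) (le (top_of Opn leO)) (psi_hom Opn leO F le res)
                          (G (top_of Opn leO)) (le' (top_of Opn leO)) (psi_hom Opn leO G le' res')
                          (\<alpha> (top_of Opn leO))) \<and>
    \<comment> \<open>natural isomorphism eta : Id \<Rightarrow> Psi Phi on Opn(X)/Frm\<close>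
     (\<exists>\<eta> :: 'a set \<Rightarrow> ('a \<Rightarrow> 'a \<Rightarrow> bool) \<Rightarrow> ('o \<Rightarrow> 'a) \<Rightarrow> 'a \<Rightarrow> 'a.
        (\<forall>L leL f. coslice_obj Opn leO L leL f \<longrightarrow>
           coslice_mor Opn leO L leL f
             (phi_F L leL f (top_of Opn leO)) (phi_le leL (top_of Opn leO))
             (psi_hom Opn leO (phi_F L leL f) (phi_le leL) (phi_res L leL f))
             (\<eta> L leL f) \<and>
           (\<exists>k. coslice_mor Opn leO
                  (phi_F L leL f (top_of Opn leO)) (phi_le leL (top_of Opn leO))
                  (psi_hom Opn leO (phi_F L leL f) (phi_le leL) (phi_res L leL f))
                  L leL f k \<and>
                (\<forall>x\<in>L. k (\<eta> L leL f x) = x) \<and>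
                (\<forall>y\<in>phi_F L leL f (top_of Opn leO). \<eta> L leL f (k y) = y))) \<and>
        (\<forall>L leL f M leM g h.
           coslice_obj Opn leO L leL f \<and> coslice_obj Opn leO M leM g \<and>
           coslice_mor Opn leO L leL f M leM g h \<longrightarrow>
           (\<forall>x\<in>L. \<eta> M leM g (h x) = phi_mor h (top_of Opn leO) (\<eta> L leL f x)))) \<and>
    \<comment> \<open>natural isomorphism eps : Phi Psi \<Rightarrow> Id on FrmSh(X)\<close>
     (\<exists>\<epsilon> :: ('o \<Rightarrow> 'a set) \<Rightarrow> ('o \<Rightarrow> 'a \<Rightarrow> 'a \<Rightarrow> bool) \<Rightarrow> ('o \<Rightarrow> 'o \<Rightarrow> 'a \<Rightarrow> 'a) \<Rightarrow> 'o \<Rightarrow> 'a \<Rightarrow> 'a.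
        (\<forall>F le res. frame_sheaf_on Opn leO F le res \<longrightarrow>
           frame_morphism Opn leO
             (phi_F (F (top_of Opn leO)) (le (top_of Opn leO)) (psi_hom Opn leO F le res))
             (phi_le (le (top_of Opn leO)))
             (phi_res (F (top_of Opn leO)) (le (top_of Opn leO)) (psi_hom Opn leO F le res))
             F le res (\<epsilon> F le res) \<and>
           (\<exists>\<beta>. frame_morphism Opn leO F le res
                  (phi_F (F (top_of Opn leO)) (le (top_of Opn leO)) (psi_hom Opn leO F le res))
                  (phi_le (le (top_of Opn leO)))
                  (phi_res (F (top_of Opn leO)) (le (top_of Opn leO)) (psi_hom Opn leO F le res))
                  \<beta> \<and>
                (\<forall>u\<in>Opn. \<forall>x\<in>phi_F (F (top_of Opn leO)) (le (top_of Opn leO)) (psi_hom Opn leO F le res) u.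
                   \<beta> u (\<epsilon> F le res u x) = x) \<and>
                (\<forall>u\<in>Opn. \<forall>y\<in>F u. \<epsilon> F le res u (\<beta> u y) = y))) \<and>
        (\<forall>F le res G le' res' \<alpha>.
           frame_sheaf_on Opn leO F le res \<and> frame_sheaf_on Opn leO G le' res' \<and>
           frame_morphism Opn leO F le res G le' res' \<alpha> \<longrightarrow>
           (\<forall>u\<in>Opn. \<forall>x\<in>phi_F (F (top_of Opn leO)) (le (top_of Opn leO)) (psi_hom Opn leO F le res) u.
              \<epsilon> G le' res' u (phi_mor (\<alpha> (top_of Opn leO)) u x) = \<alpha> u (\<epsilon> F le res u x))))"
  by (rule conjI[OF main1[OF X] conjI[OF main2[OF X] conjI[OF main3[OF X]
        conjI[OF main4[OF X] conjI[OF main5[OF X] main6[OF X]]]]]])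

end
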